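(* In the setting described in the context, assume $N_f,N_m\ge 0$, the face quadrature is exact for $Q^{N+N_f}$ on each face, and the mortar quadrature is exact for $Q^{N+N_m}$ on each face. Let $g_{ij}$ ($i,j=1,\dots,d$) be polynomials on $\hat D$ satisfying the discrete geometric conservation law $\sum_{j=1}^d\partial g_{ij}/\partial\hat x_j=0$ for each $i$, and suppose that for some integer $N_{\rm geo}\ge1$ one of the following holds: (a) every $g_{ij}\in Q^{N_{\rm geo}}(\hat D)$ and $N_{\rm geo}\le\min(N,N_f,N_m)$; or (b) every $g_{ij}$ has degree at most $N_{\rm geo}$ in $\hat x_j$ and at most $N_{\rm geo}-1$ in each $\hat x_k$, $k\ne j$, and $N_{\rm geo}\le\min(N,N_f+1,N_m+1)$. Then for each $i=1,\dots,d$, $$Q_{i,m}+Q_{i,m}^T=\begin{bmatrix}0&&\\&0&\\&&B_{i,m}\end{bmatrix},\qquad Q_{i,m}\mathbf 1=\mathbf 0.$$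
   Context: Fix $d\in\{2,3\}$, $N\ge 1$, and a 1D quadrature rule on $[-1,1]$ with $N+1$ distinct nodes $x_1,\dots,x_{N+1}$ (either Gauss–Legendre or Gauss–Lobatto nodes) and positive weights $w_1,\dots,w_{N+1}$; let $\ell_1,\dots,\ell_{N+1}$ be the degree-$N$ Lagrange basis at these nodes. Set $\hat M_{1D}=\mathrm{diag}(w_1,\dots,w_{N+1})$ and $(\hat Q_{1D})_{jk}=w_j\ell_k'(x_j)$. On the reference element $\hat D=[-1,1]^d$ the volume nodes $\hat{\mathbf x}$ are the tensor grid of the 1D nodes, $\hat M=\hat M_{1D}\otimes\cdots\otimes\hat M_{1D}$ ($d$ factors), and $\hat Q_i=A_1\otimes\cdots\otimes A_d$ with $A_i=\hat Q_{1D}$ and $A_k=\hat M_{1D}$ for $k\ne i$. The face nodes $\hat{\mathbf x}_f$ are, for each of the $2d$ faces $\{\hat x_k=\pm1\}$, the points with $\hat x_k=\pm1$ and the other coordinates ranging over the 1D nodes; each face node carries the weight equal to the product of the 1D weights of its other coordinates, and $\hat M_f$ is the diagonal matrix of these face weights. $E$ maps the values at volume nodes of a polynomial in $Q^N(\hat D)$ to its values at the face nodes. The reference normal component $\hat n_i$ at any point of the face $\{\hat x_k=\pm1\}$ equals $\pm\delta_{ik}$; $\hat B_{i,f}=\mathrm{diag}(\hat{\mathbf n}_{i,f})\hat M_f$ where $\hat{\mathbf n}_{i,f}$ holds $\hat n_i$ at the face nodes. On each face choose mortar nodes $\hat{\mathbf x}_m$ (lying on that face) with real weights; $\hat M_m$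 is the diagonal matrix of all mortar weights; $E_{mf}$ is block diagonal over faces, its block for a face mapping values at the face nodes of a polynomial in $Q^N$ of the $d-1$ face coordinates to its values at that face's mortar nodes; $E_{fm}=\hat M_f^{-1}E_{mf}^T\hat M_m$; $\hat B_{i,m}=\mathrm{diag}(\hat{\mathbf n}_{i,m})\hat M_m$ with $\hat{\mathbf n}_{i,m}$ the values of $\hat n_i$ at the mortar nodes. The mortar-based hybridized SBP operator is $$\hat Q_{i,m}=\frac12\begin{bmatrix}\hat Q_i-\hat Q_i^T & E^T\hat B_{i,f} & 0\\ -\hat B_{i,f}E & 0 & \hat B_{i,f}E_{fm}\\ 0 & -\hat B_{i,m}E_{mf} & \hat B_{i,m}\end{bmatrix}$$ (blocks indexed by volume, face, mortar nodes). $Q^{N_1,\dots,N_k}$ denotes tensor-product polynomials of degree at most $N_j$ in the $j$-th variable, $Q^M=Q^{M,\dots,M}$; "face (resp. mortar) quadrature exact for $Q^{M}$" means on each face it integrates every polynomial in $Q^{M}$ of the $d-1$ face coordinates exactly. The polynomials $g_{ij}$ play the role of scaled geometric terms $J\,\partial\hat x_j/\partial x_i$ of an element mapping. $\mathbf g_{ij}=[g_{ij}(\hat{\mathbf x});g_{ij}(\hat{\mathbf x}_f);g_{ij}(\hat{\mathbf x}_m)]$ is the vector of values of $g_{ij}$ at volume, face and mortar nodes, and the physical operator is $$Q_{i,m}=\frac12\sum_{j=1}^d\Big(\mathrm{diag}(\mathbf g_{ij})\hat Q_{j,m}+\hat Q_{j,m}\mathrm{diag}(\mathbf g_{ij})\Big).$$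 The scaled physical normals at mortar nodes are $\mathbf n_{i,m}=\sum_{j=1}^d g_{ij}(\hat{\mathbf x}_m)\circ\hat{\mathbf n}_{j,m}$ (entrywise product), and $B_{i,m}=\mathrm{diag}(\mathbf n_{i,m})\hat M_m$. (In 2D, case (b) with $d=2$ is the situation of isoparametric quadrilaterals, $g_{i1}\in Q^{N_{\rm geo},N_{\rm geo}-1}$, $g_{i2}\in Q^{N_{\rm geo}-1,N_{\rm geo}}$.) *)

theory Defs
  imports "HOL-Analysis.Analysis" "HOL-Computational_Algebra.Polynomial"
begin

(* Conventions: all indices are 0-based.  Spatial directions are 0..d-1,
   1D nodes/weights are x 0 .. x N, w 0 .. w N.  Points of R^d are
   functions nat => real (only coordinates 0..d-1 matter). *)

definition quad_exact_1d :: "nat \<Rightarrow> (nat \<Rightarrow> real) \<Rightarrow> (nat \<Rightarrow> real) \<Rightarrow> nat \<Rightarrow> bool" where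
  "quad_exact_1d N x w D \<longleftrightarrow>
     (\<forall>p :: real poly. degree p \<le> D \<longrightarrow>
        (\<Sum>j\<le>N. w j * poly p (x j)) = integral {-1..1} (poly p))"

definition gauss_legendre :: "nat \<Rightarrow> (nat \<Rightarrow> real) \<Rightarrow> (nat \<Rightarrow> real) \<Rightarrow> bool" where
  "gauss_legendre N x w \<longleftrightarrow>
     strict_mono_on {..N} x \<and> (\<forall>j\<le>N. -1 \<le> x j \<and> x j \<le> 1 \<and> 0 < w j) \<and>
     quad_exact_1d N x w (2*N+1)"

definition gauss_lobatto :: "nat \<Rightarrow> (nat \<Rightarrow> real) \<Rightarrow> (nat \<Rightarrow> real) \<Rightarrow> bool" where
  "gauss_lobatto N x w \<longleftrightarrow>
     strict_mono_on {..N} x \<and> x 0 = -1 \<and> x N = 1 \<and>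
     (\<forall>j\<le>N. -1 \<le> x j \<and> x j \<le> 1 \<and> 0 < w j) \<and>
     quad_exact_1d N x w (2*N-1)"

definition lagr :: "(nat \<Rightarrow> real) \<Rightarrow> nat \<Rightarrow> nat \<Rightarrow> real poly" where
  "lagr x N k = smult (1 / (\<Prod>m\<in>{..N}-{k}. (x k - x m))) (\<Prod>m\<in>{..N}-{k}. [:- x m, 1:])"

definition Q1D :: "(nat \<Rightarrow> real) \<Rightarrow> (nat \<Rightarrow> real) \<Rightarrow> nat \<Rightarrow> nat \<Rightarrow> nat \<Rightarrow> real" where
  "Q1D x w N j k = w j * poly (pderiv (lagr x N k)) (x j)"

definition tpoly :: "nat \<Rightarrow> (nat \<Rightarrow> nat) \<Rightarrow> ((nat \<Rightarrow> real) \<Rightarrow> real) set" where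
  "tpoly d degs = {f. \<exists>c :: (nat \<Rightarrow> nat) \<Rightarrow> real. \<forall>y.
      f y = (\<Sum>\<alpha>\<in>PiE {..<d} (\<lambda>i. {..degs i}). c \<alpha> * (\<Prod>i<d. y i ^ \<alpha> i))}"

fun iint :: "nat list \<Rightarrow> ((nat \<Rightarrow> real) \<Rightarrow> real) \<Rightarrow> (nat \<Rightarrow> real) \<Rightarrow> real" where
  "iint [] q y = q y"
| "iint (i # is) q y = integral {-1..1} (\<lambda>t. iint is q (y(i := t)))"

definition sgnb :: "bool \<Rightarrow> real" where
  "sgnb s = (if s then 1 else -1)"

definition face_integral :: "nat \<Rightarrow> nat \<Rightarrow> bool \<Rightarrow> ((nat \<Rightarrow> real) \<Rightarrow> real) \<Rightarrow> real" where
  "face_integral d k s q = iint (filter (\<lambda>i. i \<noteq> k) [0..<d]) q (\<lambda>i. if i = k then sgnb s else 0)"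

definition face_quad_exact :: "nat \<Rightarrow> nat \<Rightarrow> bool \<Rightarrow> nat \<Rightarrow> 'a set \<Rightarrow> ('a \<Rightarrow> nat \<Rightarrow> real) \<Rightarrow> ('a \<Rightarrow> real) \<Rightarrow> bool" where
  "face_quad_exact d k s M S pt wt \<longleftrightarrow>
     (\<forall>q \<in> tpoly d ((\<lambda>_. M)(k := 0)). (\<Sum>p\<in>S. wt p * q (pt p)) = face_integral d k s q)"

(* V a: volume node with multi-index a (a i \<le> N for i < d);
   F k s b: face node on face {x_k = sgnb s}, multi-index b on the other coordinates;
   M k s j: j-th mortar node on face {x_k = sgnb s} *)
datatype hnode = V "nat \<Rightarrow> nat" | F nat bool "nat \<Rightarrow> nat" | M nat bool nat

definition Vset :: "nat \<Rightarrow> nat \<Rightarrow> hnode set" where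
  "Vset d N = V ` PiE {..<d} (\<lambda>_. {..N})"

definition Fset_face :: "nat \<Rightarrow> nat \<Rightarrow> nat \<Rightarrow> bool \<Rightarrow> hnode set" where
  "Fset_face d N k s = F k s ` PiE ({..<d} - {k}) (\<lambda>_. {..N})"

definition Fset :: "nat \<Rightarrow> nat \<Rightarrow> hnode set" where
  "Fset d N = (\<Union>k<d. \<Union>s. Fset_face d N k s)"

definition Mset_face :: "(nat \<Rightarrow> bool \<Rightarrow> nat) \<Rightarrow> nat \<Rightarrow> bool \<Rightarrow> hnode set" where
  "Mset_face nm k s = M k s ` {..<nm k s}"

definition Mset :: "nat \<Rightarrow> (nat \<Rightarrow> bool \<Rightarrow> nat) \<Rightarrow> hnode set" where
  "Mset d nm = (\<Union>k<d. \<Union>s. Mset_face nm k s)"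

definition allnodes :: "nat \<Rightarrow> nat \<Rightarrow> (nat \<Rightarrow> bool \<Rightarrow> nat) \<Rightarrow> hnode set" where
  "allnodes d N nm = Vset d N \<union> Fset d N \<union> Mset d nm"

definition is_mortar :: "hnode \<Rightarrow> bool" where
  "is_mortar p = (case p of M _ _ _ \<Rightarrow> True | _ \<Rightarrow> False)"

fun pt :: "(nat \<Rightarrow> real) \<Rightarrow> (nat \<Rightarrow> bool \<Rightarrow> nat \<Rightarrow> nat \<Rightarrow> real) \<Rightarrow> hnode \<Rightarrow> nat \<Rightarrow> real" where
  "pt x xm (V a) = (\<lambda>i. x (a i))"
| "pt x xm (F k s b) = (\<lambda>i. if i = k then sgnb s else x (b i))"
| "pt x xm (M k s j) = xm k s j"

fun wt :: "nat \<Rightarrow> (nat \<Rightarrow> real) \<Rightarrow> (nat \<Rightarrow> bool \<Rightarrow> nat \<Rightarrow> real) \<Rightarrow> hnode \<Rightarrow> real" where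
  "wt d w wm (V a) = (\<Prod>i<d. w (a i))"
| "wt d w wm (F k s b) = (\<Prod>i\<in>{..<d}-{k}. w (b i))"
| "wt d w wm (M k s j) = wm k s j"

fun nhat :: "nat \<Rightarrow> hnode \<Rightarrow> real" where
  "nhat j (V a) = 0"
| "nhat j (F k s b) = (if j = k then sgnb s else 0)"
| "nhat j (M k s m) = (if j = k then sgnb s else 0)"

definition Qvol :: "nat \<Rightarrow> (nat \<Rightarrow> real) \<Rightarrow> (nat \<Rightarrow> real) \<Rightarrow> nat \<Rightarrow> nat \<Rightarrow> (nat \<Rightarrow> nat) \<Rightarrow> (nat \<Rightarrow> nat) \<Rightarrow> real" where
  "Qvol d x w N i a b = (\<Prod>k<d. if k = i then Q1D x w N (a k) (b k)
                                   else (if a k = b k then w (a k) else 0))"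

(* E_fm = Mhat_f^{-1} E_mf^T Mhat_m, entry (face node fn, mortar node mn) *)
definition Efm :: "nat \<Rightarrow> (nat \<Rightarrow> real) \<Rightarrow> (nat \<Rightarrow> bool \<Rightarrow> nat \<Rightarrow> real) \<Rightarrow> (hnode \<Rightarrow> hnode \<Rightarrow> real) \<Rightarrow> hnode \<Rightarrow> hnode \<Rightarrow> real" where
  "Efm d w wm Emf fn mn = (1 / wt d w wm fn) * Emf mn fn * wt d w wm mn"

fun Qhm :: "nat \<Rightarrow> nat \<Rightarrow> (nat \<Rightarrow> real) \<Rightarrow> (nat \<Rightarrow> real) \<Rightarrow> (nat \<Rightarrow> bool \<Rightarrow> nat \<Rightarrow> real)
            \<Rightarrow> (hnode \<Rightarrow> hnode \<Rightarrow> real) \<Rightarrow> (hnode \<Rightarrow> hnode \<Rightarrow> real) \<Rightarrow> nat \<Rightarrow> hnode \<Rightarrow> hnode \<Rightarrow> real" where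
  "Qhm d N x w wm E Emf j (V a) (V b) = (Qvol d x w N j a b - Qvol d x w N j b a) / 2"
| "Qhm d N x w wm E Emf j (V a) (F k s b) =
     E (F k s b) (V a) * nhat j (F k s b) * wt d w wm (F k s b) / 2"
| "Qhm d N x w wm E Emf j (V a) (M k s m) = 0"
| "Qhm d N x w wm E Emf j (F k s b) (V a) =
     - (nhat j (F k s b) * wt d w wm (F k s b) * E (F k s b) (V a)) / 2"
| "Qhm d N x w wm E Emf j (F k s b) (F k' s' b') = 0"
| "Qhm d N x w wm E Emf j (F k s b) (M k' s' m) =
     nhat j (F k s b) * wt d w wm (F k s b) * Efm d w wm Emf (F k s b) (M k' s' m) / 2"
| "Qhm d N x w wm E Emf j (M k s m) (V a) = 0"
| "Qhm d N x w wm E Emf j (M k s m) (F k' s' b) =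
     - (nhat j (M k s m) * wt d w wm (M k s m) * Emf (M k s m) (F k' s' b)) / 2"
| "Qhm d N x w wm E Emf j (M k s m) (M k' s' m') =
     (if (k, s, m) = (k', s', m') then nhat j (M k s m) * wt d w wm (M k s m) else 0) / 2"

definition Qphys :: "nat \<Rightarrow> nat \<Rightarrow> (nat \<Rightarrow> real) \<Rightarrow> (nat \<Rightarrow> real) \<Rightarrow> (nat \<Rightarrow> bool \<Rightarrow> nat \<Rightarrow> nat \<Rightarrow> real)
     \<Rightarrow> (nat \<Rightarrow> bool \<Rightarrow> nat \<Rightarrow> real) \<Rightarrow> (hnode \<Rightarrow> hnode \<Rightarrow> real) \<Rightarrow> (hnode \<Rightarrow> hnode \<Rightarrow> real)
     \<Rightarrow> (nat \<Rightarrow> nat \<Rightarrow> (nat \<Rightarrow> real) \<Rightarrow> real) \<Rightarrow> nat \<Rightarrow> hnode \<Rightarrow> hnode \<Rightarrow> real" where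
  "Qphys d N x w xm wm E Emf g i p q =
     (\<Sum>j<d. g i j (pt x xm p) * Qhm d N x w wm E Emf j p q
            + Qhm d N x w wm E Emf j p q * g i j (pt x xm q)) / 2"

definition nphys :: "nat \<Rightarrow> (nat \<Rightarrow> real) \<Rightarrow> (nat \<Rightarrow> bool \<Rightarrow> nat \<Rightarrow> nat \<Rightarrow> real)
     \<Rightarrow> (nat \<Rightarrow> nat \<Rightarrow> (nat \<Rightarrow> real) \<Rightarrow> real) \<Rightarrow> nat \<Rightarrow> hnode \<Rightarrow> real" where
  "nphys d x xm g i p = (\<Sum>j<d. g i j (pt x xm p) * nhat j p)"

definition pderiv_at :: "((nat \<Rightarrow> real) \<Rightarrow> real) \<Rightarrow> nat \<Rightarrow> (nat \<Rightarrow> real) \<Rightarrow> real" where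
  "pderiv_at f j y = deriv (\<lambda>t. f (y(j := t))) (y j)"

end

theory Submission
  imports Defs
begin


definition mono_d :: "nat \<Rightarrow> (nat \<Rightarrow> nat) \<Rightarrow> (nat \<Rightarrow> real) \<Rightarrow> real" where
  "mono_d d \<alpha> y = (\<Prod>i<d. y i ^ \<alpha> i)"

lemma tpoly_iff: "f \<in> tpoly d degs \<longleftrightarrow>
   (\<exists>c. \<forall>y. f y = (\<Sum>\<alpha>\<in>PiE {..<d} (\<lambda>i. {..degs i}). c \<alpha> * mono_d d \<alpha> y))"
  by (simp add: tpoly_def mono_d_def)

lemma fin_PiE_deg: fixes d :: nat and degs :: "nat \<Rightarrow> nat" shows "finite (PiE {..<d} (\<lambda>i. {..degs i}))"
  using finite_PiE[of "{..<d}" "\<lambda>i. {..degs i}"] by simp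

lemma tpoly_add:
  assumes "f \<in> tpoly d degs" "g \<in> tpoly d degs"
  shows "(\<lambda>y. f y + g y) \<in> tpoly d degs"
proof -
  obtain c where c: "\<forall>y. f y = (\<Sum>\<alpha>\<in>PiE {..<d} (\<lambda>i. {..degs i}). c \<alpha> * mono_d d \<alpha> y)"
    using assms(1) by (auto simp: tpoly_iff)
  obtain c' where c': "\<forall>y. g y = (\<Sum>\<alpha>\<in>PiE {..<d} (\<lambda>i. {..degs i}). c' \<alpha> * mono_d d \<alpha> y)"
    using assms(2) by (auto simp: tpoly_iff)
  show ?thesis unfolding tpoly_iff
    by (rule exI[of _ "\<lambda>\<alpha>. c \<alpha> + c' \<alpha>"]) (simp add: c c' sum.distrib distrib_right)
qed

lemma tpoly_smult:
  assumes "f \<in> tpoly d degs"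
  shows "(\<lambda>y. a * f y) \<in> tpoly d degs"
proof -
  obtain c where c: "\<forall>y. f y = (\<Sum>\<alpha>\<in>PiE {..<d} (\<lambda>i. {..degs i}). c \<alpha> * mono_d d \<alpha> y)"
    using assms(1) by (auto simp: tpoly_iff)
  show ?thesis unfolding tpoly_iff
    by (rule exI[of _ "\<lambda>\<alpha>. a * c \<alpha>"]) (simp add: c sum_distrib_left mult.assoc)
qed

lemma tpoly_zero: "(\<lambda>y. 0) \<in> tpoly d degs"
  unfolding tpoly_iff by (rule exI[of _ "\<lambda>_. 0"]) simp

lemma tpoly_sum:
  assumes "finite I" "\<And>i. i \<in> I \<Longrightarrow> f i \<in> tpoly d degs"
  shows "(\<lambda>y. \<Sum>i\<in>I. f i y) \<in> tpoly d degs"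
  using assms
proof (induction I rule: finite_induct)
  case empty thus ?case by (simp add: tpoly_zero)
next
  case (insert a F)
  have "(\<lambda>y. f a y + (\<Sum>i\<in>F. f i y)) \<in> tpoly d degs"
    by (rule tpoly_add) (use insert in auto)
  thus ?case using insert by simp
qed

lemma mono_d_restrict: "mono_d d (restrict \<alpha> {..<d}) = mono_d d \<alpha>"
  by (rule ext) (simp add: mono_d_def)

lemma tpoly_mono_d:
  assumes "\<And>i. i < d \<Longrightarrow> \<alpha> i \<le> degs i"
  shows "mono_d d \<alpha> \<in> tpoly d degs"
proof -
  let ?P = "PiE {..<d} (\<lambda>i. {..degs i})"
  let ?b = "restrict \<alpha> {..<d}"
  have b: "?b \<in> ?P" using assms by auto
  have "\<forall>y. mono_d d \<alpha> y = (\<Sum>\<beta>\<in>?P. (if \<beta> = ?b then 1 else 0) * mono_d d \<beta> y)"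
  proof
    fix y
    have "(\<Sum>\<beta>\<in>?P. (if \<beta> = ?b then 1 else 0) * mono_d d \<beta> y)
        = (\<Sum>\<beta>\<in>?P. (if \<beta> = ?b then mono_d d \<beta> y else 0))"
      by (rule sum.cong) auto
    also have "\<dots> = mono_d d ?b y" using b fin_PiE_deg[of d degs] by (simp add: sum.delta)
    finally show "mono_d d \<alpha> y = (\<Sum>\<beta>\<in>?P. (if \<beta> = ?b then 1 else 0) * mono_d d \<beta> y)"
      by (simp add: mono_d_restrict)
  qed
  thus ?thesis unfolding tpoly_iff by (rule exI[of _ "\<lambda>\<beta>. if \<beta> = ?b then 1 else 0"])
qed

lemma tpoly_from_monos:
  assumes "f \<in> tpoly d degs"
    and "\<And>\<alpha>. \<alpha> \<in> PiE {..<d} (\<lambda>i. {..degs i}) \<Longrightarrow> (\<lambda>y. mono_d d \<alpha> y) \<in> tpoly d degs'"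
  shows "f \<in> tpoly d degs'"
proof -
  obtain c where c: "\<forall>y. f y = (\<Sum>\<alpha>\<in>PiE {..<d} (\<lambda>i. {..degs i}). c \<alpha> * mono_d d \<alpha> y)"
    using assms(1) by (auto simp: tpoly_iff)
  have "(\<lambda>y. \<Sum>\<alpha>\<in>PiE {..<d} (\<lambda>i. {..degs i}). c \<alpha> * mono_d d \<alpha> y) \<in> tpoly d degs'"
    by (rule tpoly_sum[OF fin_PiE_deg]) (rule tpoly_smult, rule assms(2), assumption)
  moreover have "f = (\<lambda>y. \<Sum>\<alpha>\<in>PiE {..<d} (\<lambda>i. {..degs i}). c \<alpha> * mono_d d \<alpha> y)"
    using c by auto
  ultimately show ?thesis by simp
qed

lemma tpoly_mono:
  assumes "f \<in> tpoly d degs" "\<And>i. i < d \<Longrightarrow> degs i \<le> degs' i"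
  shows "f \<in> tpoly d degs'"
  apply (rule tpoly_from_monos[OF assms(1)])
  apply (rule tpoly_mono_d)
  using assms(2) by (auto simp: PiE_iff) (meson atMost_iff le_trans lessThan_iff)

lemma mono_d_mult: "mono_d d \<alpha> y * mono_d d \<beta> y = mono_d d (\<lambda>i. \<alpha> i + \<beta> i) y"
  by (simp add: mono_d_def power_add prod.distrib)

lemma tpoly_mult:
  assumes "f \<in> tpoly d D1" "g \<in> tpoly d D2"
  shows "(\<lambda>y. f y * g y) \<in> tpoly d (\<lambda>i. D1 i + D2 i)"
proof -
  obtain c where c: "\<forall>y. f y = (\<Sum>\<alpha>\<in>PiE {..<d} (\<lambda>i. {..D1 i}). c \<alpha> * mono_d d \<alpha> y)"
    using assms(1) by (auto simp: tpoly_iff)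
  obtain c' where c': "\<forall>y. g y = (\<Sum>\<alpha>\<in>PiE {..<d} (\<lambda>i. {..D2 i}). c' \<alpha> * mono_d d \<alpha> y)"
    using assms(2) by (auto simp: tpoly_iff)
  have eq: "(\<lambda>y. f y * g y) = (\<lambda>y. \<Sum>\<alpha>\<in>PiE {..<d} (\<lambda>i. {..D1 i}).
        \<Sum>\<beta>\<in>PiE {..<d} (\<lambda>i. {..D2 i}). (c \<alpha> * c' \<beta>) * mono_d d (\<lambda>i. \<alpha> i + \<beta> i) y)"
  proof (rule ext)
    fix y
    show "f y * g y = (\<Sum>\<alpha>\<in>PiE {..<d} (\<lambda>i. {..D1 i}).
        \<Sum>\<beta>\<in>PiE {..<d} (\<lambda>i. {..D2 i}). (c \<alpha> * c' \<beta>) * mono_d d (\<lambda>i. \<alpha> i + \<beta> i) y)"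
      unfolding c[rule_format] c'[rule_format] sum_product
      by (simp add: mono_d_mult[symmetric] mult_ac)
  qed
  show ?thesis unfolding eq
    apply (rule tpoly_sum[OF fin_PiE_deg], rule tpoly_sum[OF fin_PiE_deg], rule tpoly_smult)
    apply (rule tpoly_mono_d)
    by (auto simp: PiE_iff add_mono)
qed

lemma tpoly_one: "(\<lambda>y. 1) \<in> tpoly d degs"
proof -
  have "mono_d d (\<lambda>_. 0) \<in> tpoly d degs" by (rule tpoly_mono_d) simp
  moreover have "mono_d d (\<lambda>_. 0) = (\<lambda>y. 1)" by (rule ext) (simp add: mono_d_def)
  ultimately show ?thesis by simp
qed

lemma tpoly_const: "(\<lambda>y. a) \<in> tpoly d degs"
  using tpoly_smult[OF tpoly_one, where a=a] by simp

lemma tpoly_prod: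
  assumes "finite I" "\<And>i. i \<in> I \<Longrightarrow> f i \<in> tpoly d (D i)"
  shows "(\<lambda>y. \<Prod>i\<in>I. f i y) \<in> tpoly d (\<lambda>k. \<Sum>i\<in>I. D i k)"
  using assms
proof (induction I rule: finite_induct)
  case empty thus ?case by (simp add: tpoly_one)
next
  case (insert a F)
  have "(\<lambda>y. f a y * (\<Prod>i\<in>F. f i y)) \<in> tpoly d (\<lambda>k. D a k + (\<Sum>i\<in>F. D i k))"
    by (rule tpoly_mult) (use insert in auto)
  thus ?case using insert by simp
qed

lemma mono_d_upd:
  assumes "k < d"
  shows "mono_d d \<alpha> (y(k := c)) = c ^ \<alpha> k * mono_d d (\<alpha>(k := 0)) y"
proof -
  have kin: "k \<in> {..<d}" using assms by simp
  have "mono_d d \<alpha> (y(k := c)) = (y(k:=c)) k ^ \<alpha> k * (\<Prod>i\<in>{..<d}-{k}. (y(k:=c)) i ^ \<alpha> i)"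
    unfolding mono_d_def by (rule prod.remove[OF _ kin]) simp
  also have "\<dots> = c ^ \<alpha> k * (\<Prod>i\<in>{..<d}-{k}. y i ^ (\<alpha>(k:=0)) i)"
    apply (rule arg_cong2[where f="(*)"]) apply simp apply (rule prod.cong) by auto
  also have "(\<Prod>i\<in>{..<d}-{k}. y i ^ (\<alpha>(k:=0)) i) = mono_d d (\<alpha>(k := 0)) y"
    unfolding mono_d_def by (subst prod.remove[OF _ kin]) simp_all
  finally show ?thesis .
qed

lemma tpoly_subst:
  assumes "f \<in> tpoly d degs" "k < d"
  shows "(\<lambda>y. f (y(k := c))) \<in> tpoly d (degs(k := 0))"
proof -
  obtain co where co: "\<forall>y. f y = (\<Sum>\<alpha>\<in>PiE {..<d} (\<lambda>i. {..degs i}). co \<alpha> * mono_d d \<alpha> y)"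
    using assms(1) by (auto simp: tpoly_iff)
  have eq: "(\<lambda>y. f (y(k := c))) = (\<lambda>y. \<Sum>\<alpha>\<in>PiE {..<d} (\<lambda>i. {..degs i}).
              (co \<alpha> * c ^ \<alpha> k) * mono_d d (\<alpha>(k := 0)) y)"
    by (rule ext) (simp add: co mono_d_upd[OF assms(2)] mult.assoc)
  show ?thesis unfolding eq
    apply (rule tpoly_sum[OF fin_PiE_deg], rule tpoly_smult, rule tpoly_mono_d)
    by (auto simp: PiE_iff)
qed

lemma tpoly_univ:
  assumes "degree p \<le> D" "j < d"
  shows "(\<lambda>y. poly p (y j)) \<in> tpoly d ((\<lambda>_. 0)(j := D))"
proof -
  have m: "y j ^ n = mono_d d ((\<lambda>_. 0)(j := n)) y" for y n
  proof -
    have "mono_d d ((\<lambda>_. 0)(j := n)) y = (\<Prod>x<d. if x = j then y j ^ n else 1)"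
      unfolding mono_d_def by (rule prod.cong) auto
    thus ?thesis using assms(2) by simp
  qed
  have eq: "(\<lambda>y. poly p (y j)) = (\<lambda>y. \<Sum>n\<le>degree p. coeff p n * mono_d d ((\<lambda>_. 0)(j := n)) y)"
    by (rule ext) (simp add: poly_altdef m)
  show ?thesis unfolding eq
    apply (rule tpoly_sum, simp, rule tpoly_smult, rule tpoly_mono_d)
    using assms by auto
qed

lemma tpoly_univ_extract:
  assumes "f \<in> tpoly d degs" "j < d"
  shows "\<exists>p. degree p \<le> degs j \<and> (\<forall>t. f (y(j := t)) = poly p t)"
proof -
  obtain co where co: "\<forall>y. f y = (\<Sum>\<alpha>\<in>PiE {..<d} (\<lambda>i. {..degs i}). co \<alpha> * mono_d d \<alpha> y)"
    using assms(1) by (auto simp: tpoly_iff)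
  define p where "p = (\<Sum>\<alpha>\<in>PiE {..<d} (\<lambda>i. {..degs i}).
       monom (co \<alpha> * mono_d d (\<alpha>(j := 0)) y) (\<alpha> j))"
  have "degree p \<le> degs j" unfolding p_def
    apply (rule degree_sum_le[OF fin_PiE_deg])
    using assms(2) by (auto simp: PiE_iff intro: order.trans[OF degree_monom_le])
  moreover have "\<forall>t. f (y(j := t)) = poly p t"
    by (simp add: co p_def poly_sum poly_monom mono_d_upd[OF assms(2)] algebra_simps)
  ultimately show ?thesis by blast
qed

lemma deriv_poly: "deriv (poly p) t = poly (pderiv p) t"
  by (rule DERIV_imp_deriv) (rule poly_DERIV)



lemma pderiv_sum': "pderiv (\<Sum>i\<in>A. f i) = (\<Sum>i\<in>A. pderiv (f i))"
  by (induction A rule: infinite_finite_induct) (auto simp: pderiv_add)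

lemma lagr_node:
  assumes inj: "inj_on x {..N}" and k: "k \<le> N" and n: "n \<le> N"
  shows "poly (lagr x N k) (x n) = (if n = k then 1 else 0)"
proof (cases "n = k")
  case True
  have "(\<Prod>m\<in>{..N}-{k}. (x k - x m)) \<noteq> 0"
    using inj k by (auto simp: inj_on_def)
  thus ?thesis using True by (simp add: lagr_def poly_prod)
next
  case False
  have "(\<Prod>m\<in>{..N}-{k}. poly [:- x m, 1:] (x n)) = 0"
    using False n by (intro prod_zero) (auto intro!: bexI[of _ n])
  thus ?thesis using False by (simp add: lagr_def poly_prod)
qed

lemma degree_lagr:
  assumes k: "k \<le> N"
  shows "degree (lagr x N k) \<le> N"
proof -
  have "degree (\<Prod>m\<in>{..N}-{k}. [:- x m, 1:]) \<le> (\<Sum>m\<in>{..N}-{k}. (degree \<circ> (\<lambda>m. [:- x m, 1:])) m)"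
    by (rule degree_prod_sum_le) simp
  also have "\<dots> = card ({..N}-{k})" by simp
  also have "\<dots> = N" using k by simp
  finally show ?thesis unfolding lagr_def using degree_smult_le order.trans by blast
qed

lemma lagr_interp:
  assumes inj: "inj_on x {..N}" and deg: "degree p \<le> N"
  shows "p = (\<Sum>m\<le>N. smult (poly p (x m)) (lagr x N m))"
proof (rule poly_eqI_degree[where A="x ` {..N}"])
  fix t assume "t \<in> x ` {..N}"
  then obtain n where n: "n \<le> N" "t = x n" by auto
  have "poly (\<Sum>m\<le>N. smult (poly p (x m)) (lagr x N m)) t
        = (\<Sum>m\<le>N. poly p (x m) * (if n = m then 1 else 0))"
    using n by (simp add: poly_sum lagr_node[OF inj])
  also have "\<dots> = poly p t" using n by (simp add: if_distrib cong: if_cong)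
  finally show "poly p t = poly (\<Sum>m\<le>N. smult (poly p (x m)) (lagr x N m)) t" by simp
next
  have c: "card (x ` {..N}) = Suc N" using inj by (simp add: card_image)
  show "degree p < card (x ` {..N})" using c deg by simp
  have "degree (\<Sum>m\<le>N. smult (poly p (x m)) (lagr x N m)) \<le> N"
    by (rule degree_sum_le) (auto intro: order.trans[OF degree_smult_le] degree_lagr)
  thus "degree (\<Sum>m\<le>N. smult (poly p (x m)) (lagr x N m)) < card (x ` {..N})" using c by simp
qed

lemma L1:
  assumes inj: "inj_on x {..N}" and deg: "degree P \<le> N"
  shows "(\<Sum>m\<le>N. Q1D x w N aj m * poly P (x m)) = w aj * poly (pderiv P) (x aj)"
proof -
  have "poly (pderiv P) (x aj) = poly (pderiv (\<Sum>m\<le>N. smult (poly P (x m)) (lagr x N m))) (x aj)"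
    using lagr_interp[OF inj deg] by simp
  also have "\<dots> = (\<Sum>m\<le>N. poly P (x m) * poly (pderiv (lagr x N m)) (x aj))"
    by (simp add: pderiv_sum' poly_sum pderiv_smult)
  finally show ?thesis by (simp add: Q1D_def sum_distrib_left mult_ac)
qed

lemma ftc_poly: "integral {-1..1} (poly (pderiv q)) = poly q 1 - poly q (-1 :: real)"
proof -
  have "(poly (pderiv q) has_integral (poly q 1 - poly q (-1))) {-1..1::real}"
    apply (rule fundamental_theorem_of_calculus)
     apply simp
    apply (rule has_vector_derivative_at_within)
    using poly_DERIV[of q] by (simp add: has_real_derivative_iff_has_vector_derivative)
  thus ?thesis by (rule integral_unique)
qed

lemma L2:
  assumes inj: "inj_on x {..N}" and deg: "degree P \<le> N" and aj: "aj \<le> N"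
    and N1: "N \<ge> 1" and quad: "quad_exact_1d N x w (2*N-1)"
  shows "(\<Sum>m\<le>N. Q1D x w N m aj * poly P (x m))
     = poly (lagr x N aj * P) 1 - poly (lagr x N aj * P) (-1) - w aj * poly (pderiv P) (x aj)"
proof -
  let ?l = "lagr x N aj"
  have dl: "degree ?l \<le> N" by (rule degree_lagr[OF aj])
  have "degree (?l * P) \<le> 2*N"
    using degree_mult_le[of ?l P] dl deg by simp
  hence dd: "degree (pderiv (?l * P)) \<le> 2*N-1" by (simp add: degree_pderiv)
  have "(\<Sum>m\<le>N. w m * poly (pderiv (?l * P)) (x m)) = integral {-1..1} (poly (pderiv (?l * P)))"
    using quad dd unfolding quad_exact_1d_def by blast
  also have "\<dots> = poly (?l * P) 1 - poly (?l * P) (-1)" by (rule ftc_poly)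
  finally have I: "(\<Sum>m\<le>N. w m * poly (pderiv (?l * P)) (x m)) = poly (?l * P) 1 - poly (?l * P) (-1)" .
  have split: "(\<Sum>m\<le>N. w m * poly (pderiv (?l * P)) (x m))
      = (\<Sum>m\<le>N. Q1D x w N m aj * poly P (x m)) + (\<Sum>m\<le>N. w m * poly ?l (x m) * poly (pderiv P) (x m))"
    by (simp add: pderiv_mult Q1D_def sum.distrib[symmetric] algebra_simps)
  have "(\<Sum>m\<le>N. w m * poly ?l (x m) * poly (pderiv P) (x m))
      = (\<Sum>m\<le>N. if m = aj then w m * poly (pderiv P) (x m) else 0)"
    by (rule sum.cong) (auto simp: lagr_node[OF inj aj])
  also have "\<dots> = w aj * poly (pderiv P) (x aj)" using aj by simp
  finally show ?thesis using I split by simp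
qed



locale setting =
  fixes d N Nf Nm :: nat
    and x w :: "nat \<Rightarrow> real"
    and nm :: "nat \<Rightarrow> bool \<Rightarrow> nat"
    and xm :: "nat \<Rightarrow> bool \<Rightarrow> nat \<Rightarrow> nat \<Rightarrow> real"
    and wm :: "nat \<Rightarrow> bool \<Rightarrow> nat \<Rightarrow> real"
    and E Emf :: "hnode \<Rightarrow> hnode \<Rightarrow> real"
    and g :: "nat \<Rightarrow> nat \<Rightarrow> (nat \<Rightarrow> real) \<Rightarrow> real"
  assumes inj: "inj_on x {..N}"
    and xr: "\<forall>j\<le>N. -1 \<le> x j \<and> x j \<le> 1"
    and wpos: "\<forall>j\<le>N. 0 < w j"
    and N1: "N \<ge> 1"
    and quad: "quad_exact_1d N x w (2*N-1)"
    and hE: "\<forall>f \<in> tpoly d (\<lambda>_. N). \<forall>fn \<in> Fset d N.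
               (\<Sum>a\<in>Vset d N. E fn a * f (pt x xm a)) = f (pt x xm fn)"
    and hxm: "\<forall>k<d. \<forall>s. \<forall>j<nm k s. xm k s j k = sgnb s \<and>
               (\<forall>i<d. -1 \<le> xm k s j i \<and> xm k s j i \<le> 1)"
    and hEmf_blk: "\<forall>mn \<in> Mset d nm. \<forall>fn \<in> Fset d N.
               (case (mn, fn) of (M k s _, F k' s' _) \<Rightarrow> (k, s) \<noteq> (k', s') \<longrightarrow> Emf mn fn = 0
                                | _ \<Rightarrow> True)"
    and hEmf: "\<forall>k<d. \<forall>s. \<forall>q \<in> tpoly d ((\<lambda>_. N)(k := 0)). \<forall>mn \<in> Mset_face nm k s.
               (\<Sum>fn\<in>Fset_face d N k s. Emf mn fn * q (pt x xm fn)) = q (pt x xm mn)"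
    and hface_exact: "\<forall>k<d. \<forall>s. face_quad_exact d k s (N + Nf) (Fset_face d N k s) (pt x xm) (wt d w wm)"
    and hmortar_exact: "\<forall>k<d. \<forall>s. face_quad_exact d k s (N + Nm) (Mset_face nm k s) (pt x xm) (wt d w wm)"
    and hGCL: "\<forall>i<d. \<forall>y. (\<forall>k<d. -1 \<le> y k \<and> y k \<le> 1) \<longrightarrow> (\<Sum>j<d. pderiv_at (g i j) j y) = 0"
    and hg: "\<forall>i<d. \<forall>k<d. \<exists>D Dk. D \<le> Nf \<and> D \<le> Nm \<and> D \<le> N \<and> Dk \<le> N \<and> g i k \<in> tpoly d ((\<lambda>_. D)(k := Dk))"
begin

abbreviation "X \<equiv> pt x xm"
abbreviation "W \<equiv> wt d w wm"
abbreviation "Qh \<equiv> Qhm d N x w wm E Emf"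
abbreviation "PV \<equiv> PiE {..<d} (\<lambda>_::nat. {..N})"
abbreviation "PF k \<equiv> PiE ({..<d} - {k}) (\<lambda>_::nat. {..N})"

lemma V_in_Vset[simp]: "V a \<in> Vset d N \<longleftrightarrow> a \<in> PV"
  by (auto simp: Vset_def)
lemma F_notin_Vset[simp]: "F k s b \<notin> Vset d N" by (auto simp: Vset_def)
lemma M_notin_Vset[simp]: "M k s m \<notin> Vset d N" by (auto simp: Vset_def)
lemma F_in_Fset[simp]: "F k s b \<in> Fset d N \<longleftrightarrow> k < d \<and> b \<in> PF k"
  by (auto simp: Fset_def Fset_face_def)
lemma V_notin_Fset[simp]: "V a \<notin> Fset d N" by (auto simp: Fset_def Fset_face_def)
lemma M_notin_Fset[simp]: "M k s m \<notin> Fset d N" by (auto simp: Fset_def Fset_face_def)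
lemma M_in_Mset[simp]: "M k s m \<in> Mset d nm \<longleftrightarrow> k < d \<and> m < nm k s"
  by (auto simp: Mset_def Mset_face_def)
lemma V_notin_Mset[simp]: "V a \<notin> Mset d nm" by (auto simp: Mset_def Mset_face_def)
lemma F_notin_Mset[simp]: "F k s b \<notin> Mset d nm" by (auto simp: Mset_def Mset_face_def)
lemma F_in_Fset_face[simp]: "F k' s' b \<in> Fset_face d N k s \<longleftrightarrow> k' = k \<and> s' = s \<and> b \<in> PF k"
  by (auto simp: Fset_face_def)
lemma V_notin_Fset_face[simp]: "V a \<notin> Fset_face d N k s" by (auto simp: Fset_face_def)
lemma M_notin_Fset_face[simp]: "M k' s' m \<notin> Fset_face d N k s" by (auto simp: Fset_face_def)
lemma M_in_Mset_face[simp]: "M k' s' m \<in> Mset_face nm k s \<longleftrightarrow> k' = k \<and> s' = s \<and> m < nm k s"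
  by (auto simp: Mset_face_def)
lemma V_notin_Mset_face[simp]: "V a \<notin> Mset_face nm k s" by (auto simp: Mset_face_def)
lemma F_notin_Mset_face[simp]: "F k' s' b \<notin> Mset_face nm k s" by (auto simp: Mset_face_def)

lemma allnodes_simps[simp]:
  "V a \<in> allnodes d N nm \<longleftrightarrow> a \<in> PV"
  "F k s b \<in> allnodes d N nm \<longleftrightarrow> k < d \<and> b \<in> PF k"
  "M k s m \<in> allnodes d N nm \<longleftrightarrow> k < d \<and> m < nm k s"
  by (auto simp: allnodes_def)

lemma finite_PV: "finite PV" by (rule finite_PiE) auto
lemma finite_PF: "finite (PF k)" by (rule finite_PiE) auto

lemma finite_Vset[simp]: "finite (Vset d N)" unfolding Vset_def using finite_PV by simp
lemma finite_Fset_face[simp]: "finite (Fset_face d N k s)" unfolding Fset_face_def using finite_PF by simp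
lemma finite_Fset[simp]: "finite (Fset d N)" unfolding Fset_def by simp
lemma finite_Mset_face[simp]: "finite (Mset_face nm k s)" unfolding Mset_face_def by simp
lemma finite_Mset[simp]: "finite (Mset d nm)" unfolding Mset_def by simp

lemma Fset_face_sub: "k < d \<Longrightarrow> Fset_face d N k s \<subseteq> Fset d N"
  by (auto simp: Fset_def)
lemma Mset_face_sub: "k < d \<Longrightarrow> Mset_face nm k s \<subseteq> Mset d nm"
  by (auto simp: Mset_def)

lemma sum_allnodes:
  "(\<Sum>q\<in>allnodes d N nm. f q) = (\<Sum>q\<in>Vset d N. f q) + (\<Sum>q\<in>Fset d N. f q) + (\<Sum>q\<in>Mset d nm. f q)"
proof -
  have d1: "(Vset d N \<union> Fset d N) \<inter> Mset d nm = {}"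
    by (auto simp: Vset_def Fset_def Fset_face_def Mset_def Mset_face_def)
  have d2: "Vset d N \<inter> Fset d N = {}"
    by (auto simp: Vset_def Fset_def Fset_face_def)
  show ?thesis unfolding allnodes_def
    by (simp add: sum.union_disjoint d1 d2)
qed

lemma wtF_pos: "b \<in> PF k \<Longrightarrow> W (F k s b) > 0"
  using wpos by (auto intro!: prod_pos simp: PiE_iff)

lemma wtV_pos: "a \<in> PV \<Longrightarrow> W (V a) > 0"
  using wpos by (auto intro!: prod_pos simp: PiE_iff)

lemma Efm_cancel:
  "W (F k s b) \<noteq> 0 \<Longrightarrow> W (F k s b) * Efm d w wm Emf (F k s b) q = Emf q (F k s b) * W q"
  by (simp add: Efm_def)



lemma t3:
  assumes wF: "W (F k s b) \<noteq> 0" and mM: "M k' s' m \<in> Mset d nm" and fF: "F k s b \<in> Fset d N"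
  shows "Qh j (F k s b) (M k' s' m) + Qh j (M k' s' m) (F k s b) = (if F k s b = M k' s' m \<and> is_mortar (F k s b) then nhat j (F k s b) * W (F k s b) else 0)"
proof -
    have e: "nhat j (F k s b) * W (F k s b) * Efm d w wm Emf (F k s b) (M k' s' m)
           = nhat j (F k s b) * (Emf (M k' s' m) (F k s b) * W (M k' s' m))"
      using Efm_cancel[OF wF] by (simp add: mult.assoc)
    show ?thesis
    proof (cases "(k', s') = (k, s)")
      case True
      thus ?thesis using e by (simp add: is_mortar_def mult_ac)
    next
      case False
      have "Emf (M k' s' m) (F k s b) = 0" using hEmf_blk[rule_format, OF mM fF] False by auto
      thus ?thesis using e by (simp add: is_mortar_def)
    qed
qed

lemma t1: "Qh j (F k s b) (V a) + Qh j (V a) (F k s b) = (if F k s b = V a \<and> is_mortar (F k s b) then nhat j (F k s b) * W (F k s b) else 0)"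
  by (simp add: is_mortar_def mult_ac)
lemma t2: "Qh j (F k s b) (F k' s' b') + Qh j (F k' s' b') (F k s b) = (if F k s b = F k' s' b' \<and> is_mortar (F k s b) then nhat j (F k s b) * W (F k s b) else 0)"
  by (simp add: is_mortar_def)
lemma t1': "Qh j (V a) (F k s b) + Qh j (F k s b) (V a) = (if V a = F k s b \<and> is_mortar (V a) then nhat j (V a) * W (V a) else 0)"
  by (simp add: is_mortar_def mult_ac)
lemma tVV: "Qh j (V a) (V b) + Qh j (V b) (V a) = (if V a = V b \<and> is_mortar (V a) then nhat j (V a) * W (V a) else 0)"
  by (simp add: is_mortar_def diff_divide_distrib)
lemma tVM: "Qh j (V a) (M k s m) + Qh j (M k s m) (V a) = (if V a = M k s m \<and> is_mortar (V a) then nhat j (V a) * W (V a) else 0)"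
  by (simp add: is_mortar_def)
lemma tMV: "Qh j (M k s m) (V a) + Qh j (V a) (M k s m) = (if M k s m = V a \<and> is_mortar (M k s m) then nhat j (M k s m) * W (M k s m) else 0)"
  by (simp add: is_mortar_def)
lemma tMM: "Qh j (M k s m) (M k' s' m') + Qh j (M k' s' m') (M k s m) = (if M k s m = M k' s' m' \<and> is_mortar (M k s m) then nhat j (M k s m) * W (M k s m) else 0)"
  by (auto simp: is_mortar_def)
lemma t3':
  assumes wF: "W (F k s b) \<noteq> 0" and mM: "M k' s' m \<in> Mset d nm" and fF: "F k s b \<in> Fset d N"
  shows "Qh j (M k' s' m) (F k s b) + Qh j (F k s b) (M k' s' m) = (if M k' s' m = F k s b \<and> is_mortar (M k' s' m) then nhat j (M k' s' m) * W (M k' s' m) else 0)"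
  using t3[OF assms, of j] by (simp add: add.commute)

lemma skew:
  assumes p: "p \<in> allnodes d N nm" and q: "q \<in> allnodes d N nm"
  shows "Qh j p q + Qh j q p = (if p = q \<and> is_mortar p then nhat j p * W p else 0)"
proof (cases p)
  case pV: (V a)
  show ?thesis
  proof (cases q)
    case (V b) show ?thesis unfolding pV V by (rule tVV)
  next
    case (F k s b) show ?thesis unfolding pV F by (rule t1')
  next
    case (M k s m) show ?thesis unfolding pV M by (rule tVM)
  qed
next
  case pF: (F k s b)
  have wF: "W (F k s b) \<noteq> 0" by (rule order.strict_implies_not_eq[symmetric], rule wtF_pos) (use p pF in simp)
  have fF: "F k s b \<in> Fset d N" using p pF by simp
  show ?thesis
  proof (cases q)
    case (V a) show ?thesis unfolding pF V by (rule t1)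
  next
    case (F k' s' b') show ?thesis unfolding pF F by (rule t2)
  next
    case (M k' s' m)
    have mM: "M k' s' m \<in> Mset d nm" using q M by simp
    show ?thesis unfolding pF M by (rule t3[OF wF mM fF])
  qed
next
  case pM: (M k s m)
  have mM: "M k s m \<in> Mset d nm" using p pM by simp
  show ?thesis
  proof (cases q)
    case (V a) show ?thesis unfolding pM V by (rule tMV)
  next
    case (F k' s' b')
    have wF: "W (F k' s' b') \<noteq> 0" by (rule order.strict_implies_not_eq[symmetric], rule wtF_pos) (use q F in simp)
    have fF: "F k' s' b' \<in> Fset d N" using q F by simp
    show ?thesis unfolding pM F by (rule t3'[OF wF mM fF])
  next
    case (M k' s' m') show ?thesis unfolding pM M by (rule tMM)
  qed
qed
lemma Qphys_sym:
  assumes p: "p \<in> allnodes d N nm" and q: "q \<in> allnodes d N nm"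
  shows "Qphys d N x w xm wm E Emf g i p q + Qphys d N x w xm wm E Emf g i q p
       = (if p = q \<and> is_mortar p then nphys d x xm g i p * W p else 0)"
proof -
  have "Qphys d N x w xm wm E Emf g i p q + Qphys d N x w xm wm E Emf g i q p
      = (\<Sum>j<d. (g i j (X p) + g i j (X q)) * (Qh j p q + Qh j q p)) / 2"
    unfolding Qphys_def by (simp add: sum.distrib[symmetric] add_divide_distrib[symmetric] algebra_simps)
  also have "\<dots> = (\<Sum>j<d. (g i j (X p) + g i j (X q)) * (if p = q \<and> is_mortar p then nhat j p * W p else 0)) / 2"
    using skew[OF p q] by simp
  also have "\<dots> = (if p = q \<and> is_mortar p then nphys d x xm g i p * W p else 0)"
  proof (cases "p = q \<and> is_mortar p")
    case True
    thus ?thesis by (auto simp: nphys_def sum_distrib_right sum_divide_distrib intro!: sum.cong)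
  next
    case False
    hence "(\<Sum>j<d. (g i j (X p) + g i j (X q)) * (if p = q \<and> is_mortar p then nhat j p * W p else 0)) = 0"
      by (simp only: if_False mult_zero_right sum.neutral_const)
    thus ?thesis using False by (simp only: if_False div_0)
  qed
  finally show ?thesis .
qed

end


lemma red:
  fixes A :: "nat \<Rightarrow> nat \<Rightarrow> real" and w :: "nat \<Rightarrow> real" and h :: "(nat \<Rightarrow> nat) \<Rightarrow> real"
  assumes a: "a \<in> PiE {..<d} (\<lambda>_. {..N})" and j: "j < d"
  shows "(\<Sum>b\<in>PiE {..<d} (\<lambda>_. {..N}). (\<Prod>k<d. if k = j then A (a k) (b k) else (if a k = b k then w (a k) else 0)) * h b)
       = (\<Prod>k\<in>{..<d}-{j}. w (a k)) * (\<Sum>m\<le>N. A (a j) m * h (a(j:=m)))"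
proof -
  let ?P = "PiE {..<d} (\<lambda>_::nat. {..N::nat})"
  let ?G = "\<lambda>b. (\<Prod>k<d. if k = j then A (a k) (b k) else (if a k = b k then w (a k) else 0)) * h b"
  let ?img = "(\<lambda>m. a(j:=m)) ` {..N}"
  have fin: "finite ?P" by (rule finite_PiE) auto
  have sub: "?img \<subseteq> ?P" using a j by (auto simp: PiE_iff extensional_def split: if_split_asm)
  have z: "?G b = 0" if b: "b \<in> ?P - ?img" for b
  proof -
    have "\<exists>k<d. k \<noteq> j \<and> b k \<noteq> a k"
    proof (rule ccontr)
      assume "\<not> ?thesis"
      hence eq: "\<forall>k<d. k \<noteq> j \<longrightarrow> b k = a k" by auto
      have "b = a(j := b j)"
      proof
        fix i show "b i = (a(j := b j)) i"
          using eq a b by (cases "i < d") (auto simp: PiE_iff extensional_def)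
      qed
      moreover have "b j \<le> N" using b j by (auto simp: PiE_iff)
      ultimately have "b \<in> ?img" by blast
      thus False using b by blast
    qed
    then obtain k where k: "k < d" "k \<noteq> j" "b k \<noteq> a k" by auto
    have "(\<Prod>k<d. if k = j then A (a k) (b k) else (if a k = b k then w (a k) else 0)) = 0"
      by (rule prod_zero) (use k in \<open>auto intro!: bexI[of _ k]\<close>)
    thus ?thesis by simp
  qed
  have "sum ?G ?P = sum ?G ?img"
    by (rule sum.mono_neutral_right[OF fin sub]) (use z in blast)
  also have "\<dots> = (\<Sum>m\<le>N. ?G (a(j:=m)))"
  proof (rule sum.reindex_cong[where l="\<lambda>m. a(j:=m)"])
    show "inj_on (\<lambda>m. a(j := m)) {..N}"
      by (rule inj_onI) (metis fun_upd_same)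
  qed auto
  also have "\<dots> = (\<Sum>m\<le>N. (\<Prod>k\<in>{..<d}-{j}. w (a k)) * (A (a j) m * h (a(j:=m))))"
  proof (rule sum.cong[OF refl])
    fix m
    have jin: "j \<in> {..<d}" using j by simp
    have "(\<Prod>k<d. if k = j then A (a k) ((a(j:=m)) k) else (if a k = (a(j:=m)) k then w (a k) else 0))
        = A (a j) m * (\<Prod>k\<in>{..<d}-{j}. w (a k))"
      apply (subst prod.remove[OF _ jin], simp)
      apply (rule arg_cong2[where f="(*)"], simp)
      by (rule prod.cong) auto
    thus "?G (a(j:=m)) = (\<Prod>k\<in>{..<d}-{j}. w (a k)) * (A (a j) m * h (a(j:=m)))" by simp
  qed
  also have "\<dots> = (\<Prod>k\<in>{..<d}-{j}. w (a k)) * (\<Sum>m\<le>N. A (a j) m * h (a(j:=m)))"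
    by (simp add: sum_distrib_left)
  finally show ?thesis .
qed

lemma prod_ind: "finite I \<Longrightarrow> (\<Prod>i\<in>I. if P i then 1 else 0 :: real) = (if \<forall>i\<in>I. P i then 1 else 0)"
  by (induction I rule: finite_induct) auto

lemma prod_lagr_delta:
  assumes inj: "inj_on x {..N}" and fI: "finite I"
    and a: "a \<in> PiE I (\<lambda>_. {..N})" and b: "b \<in> PiE I (\<lambda>_. {..N})"
  shows "(\<Prod>i\<in>I. poly (lagr x N (a i)) (x (b i))) = (if b = a then 1 else 0)"
proof -
  have "(\<Prod>i\<in>I. poly (lagr x N (a i)) (x (b i))) = (\<Prod>i\<in>I. if b i = a i then 1 else 0)"
  proof (rule prod.cong[OF refl])
    fix i assume i: "i \<in> I"
    have "a i \<le> N" "b i \<le> N" using a b i by (auto simp: PiE_iff)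
    thus "poly (lagr x N (a i)) (x (b i)) = (if b i = a i then 1 else 0)"
      using lagr_node[OF inj, of "a i" "b i"] by simp
  qed
  also have "\<dots> = (if \<forall>i\<in>I. b i = a i then 1 else 0)" by (rule prod_ind[OF fI])
  also have "(\<forall>i\<in>I. b i = a i) \<longleftrightarrow> b = a"
    using a b by (auto simp: PiE_iff extensional_def) (rule ext, metis)
  finally show ?thesis .
qed



context setting begin

definition Srow where "Srow j p u = (\<Sum>q\<in>allnodes d N nm. Qh j p q * u (X q))"

lemma row_decomp:
  "(\<Sum>q\<in>allnodes d N nm. Qphys d N x w xm wm E Emf g i p q)
     = (\<Sum>j<d. g i j (X p) * Srow j p (\<lambda>_. 1) + Srow j p (g i j)) / 2"
proof -
  have "(\<Sum>q\<in>allnodes d N nm. Qphys d N x w xm wm E Emf g i p q)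
      = (\<Sum>q\<in>allnodes d N nm. \<Sum>j<d. g i j (X p) * Qh j p q + Qh j p q * g i j (X q)) / 2"
    unfolding Qphys_def by (simp add: sum_divide_distrib)
  also have "(\<Sum>q\<in>allnodes d N nm. \<Sum>j<d. g i j (X p) * Qh j p q + Qh j p q * g i j (X q))
      = (\<Sum>j<d. \<Sum>q\<in>allnodes d N nm. g i j (X p) * Qh j p q + Qh j p q * g i j (X q))"
    by (rule sum.swap)
  also have "\<dots> = (\<Sum>j<d. g i j (X p) * Srow j p (\<lambda>_. 1) + Srow j p (g i j))"
    unfolding Srow_def by (simp add: sum.distrib sum_distrib_left)
  finally show ?thesis .
qed

lemma Vset_elem: "q \<in> Vset d N \<Longrightarrow> \<exists>a\<in>PV. q = V a" by (auto simp: Vset_def)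
lemma Fset_elem: "q \<in> Fset d N \<Longrightarrow> \<exists>k s b. k < d \<and> b \<in> PF k \<and> q = F k s b"
  by (auto simp: Fset_def Fset_face_def)
lemma Mset_elem: "q \<in> Mset d nm \<Longrightarrow> \<exists>k s m. k < d \<and> m < nm k s \<and> q = M k s m"
  by (auto simp: Mset_def Mset_face_def)

lemma sum_Vset: "(\<Sum>q\<in>Vset d N. f q) = (\<Sum>a\<in>PV. f (V a))"
  unfolding Vset_def by (simp add: sum.reindex inj_on_def)
lemma sum_Fset_face: "(\<Sum>q\<in>Fset_face d N k s. f q) = (\<Sum>b\<in>PF k. f (F k s b))"
  unfolding Fset_face_def by (simp add: sum.reindex inj_on_def)

definition La where "La a y = (\<Prod>i<d. poly (lagr x N (a i)) (y i))"

lemma La_tpoly: assumes a: "a \<in> PV" shows "La a \<in> tpoly d (\<lambda>_. N)"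
proof -
  have "(\<lambda>y. \<Prod>i<d. poly (lagr x N (a i)) (y i)) \<in> tpoly d (\<lambda>k. \<Sum>i<d. ((\<lambda>_. 0)(i := N)) k)"
    apply (rule tpoly_prod, simp)
    apply (rule tpoly_univ)
    using a by (auto intro: degree_lagr simp: PiE_iff)
  hence "(\<lambda>y. \<Prod>i<d. poly (lagr x N (a i)) (y i)) \<in> tpoly d (\<lambda>_. N)"
    by (rule tpoly_mono) (simp add: fun_upd_def)
  thus ?thesis unfolding La_def[abs_def] .
qed

lemma E_eq:
  assumes q: "q \<in> Fset d N" and a: "a \<in> PV"
  shows "E q (V a) = La a (X q)"
proof -
  have "La a (X q) = (\<Sum>a'\<in>Vset d N. E q a' * La a (X a'))"
    using hE La_tpoly[OF a] q by auto
  also have "\<dots> = (\<Sum>a'\<in>PV. E q (V a') * La a (X (V a')))" by (rule sum_Vset)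
  also have "\<dots> = (\<Sum>a'\<in>PV. if a' = a then E q (V a') else 0)"
  proof (rule sum.cong[OF refl])
    fix a' assume a': "a' \<in> PV"
    have "La a (X (V a')) = (if a' = a then 1 else 0)"
      unfolding La_def using prod_lagr_delta[OF inj _ a a'] by simp
    thus "E q (V a') * La a (X (V a')) = (if a' = a then E q (V a') else 0)" by simp
  qed
  also have "\<dots> = E q (V a)" using a finite_PV by simp
  finally show ?thesis by simp
qed

end


context setting begin

lemma face_term:
  assumes a: "a \<in> PV" and j: "j < d"
  shows "(\<Sum>q\<in>Fset_face d N j s. Qh j (V a) q * f (X q))
     = poly (lagr x N (a j)) (sgnb s) * sgnb s * (\<Prod>k\<in>{..<d}-{j}. w (a k)) / 2 * f ((X (V a))(j := sgnb s))"
proof -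
  define a' where "a' = restrict a ({..<d}-{j})"
  have a': "a' \<in> PF j" using a by (auto simp: PiE_iff a'_def)
  have Xa': "X (F j s a') = (X (V a))(j := sgnb s)"
  proof
    fix i show "X (F j s a') i = ((X (V a))(j := sgnb s)) i"
      using a by (cases "i < d") (auto simp: PiE_iff extensional_def a'_def)
  qed
  have Wa': "W (F j s a') = (\<Prod>k\<in>{..<d}-{j}. w (a k))"
    by (simp add: a'_def)
  have jin: "j \<in> {..<d}" using j by simp
  have trm: "Qh j (V a) (F j s b) * f (X (F j s b))
      = (if b = a' then poly (lagr x N (a j)) (sgnb s) * sgnb s * W (F j s a') / 2 * f (X (F j s a')) else 0)"
    if b: "b \<in> PF j" for b
  proof -
    have Fb: "F j s b \<in> Fset d N" using b j by simp
    have "La a (X (F j s b)) = poly (lagr x N (a j)) (sgnb s) * (\<Prod>i\<in>{..<d}-{j}. poly (lagr x N (a i)) (X (F j s b) i))"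
      unfolding La_def by (subst prod.remove[OF _ jin]) simp_all
    also have "(\<Prod>i\<in>{..<d}-{j}. poly (lagr x N (a i)) (X (F j s b) i))
        = (\<Prod>i\<in>{..<d}-{j}. poly (lagr x N (a' i)) (x (b i)))"
      by (rule prod.cong) (auto simp: a'_def)
    also have "\<dots> = (if b = a' then 1 else 0)"
      by (rule prod_lagr_delta[OF inj _ a' b]) simp
    finally have "E (F j s b) (V a) = poly (lagr x N (a j)) (sgnb s) * (if b = a' then 1 else 0)"
      using E_eq[OF Fb a] by simp
    thus ?thesis by auto
  qed
  have "(\<Sum>q\<in>Fset_face d N j s. Qh j (V a) q * f (X q)) = (\<Sum>b\<in>PF j. Qh j (V a) (F j s b) * f (X (F j s b)))"
    by (rule sum_Fset_face)
  also have "\<dots> = (\<Sum>b\<in>PF j. if b = a' then poly (lagr x N (a j)) (sgnb s) * sgnb s * W (F j s a') / 2 * f (X (F j s a')) else 0)"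
    by (rule sum.cong[OF refl]) (rule trm)
  also have "\<dots> = poly (lagr x N (a j)) (sgnb s) * sgnb s * W (F j s a') / 2 * f (X (F j s a'))"
    using a' finite_PF by simp
  finally show ?thesis unfolding Wa' Xa' .
qed

lemma Fset_sum_vol:
  assumes a: "a \<in> PV" and j: "j < d"
  shows "(\<Sum>q\<in>Fset d N. Qh j (V a) q * f (X q))
     = (\<Prod>k\<in>{..<d}-{j}. w (a k)) / 2 * (poly (lagr x N (a j)) 1 * f ((X (V a))(j := 1))
          - poly (lagr x N (a j)) (-1) * f ((X (V a))(j := -1)))"
proof -
  let ?U = "Fset_face d N j True \<union> Fset_face d N j False"
  have sub: "?U \<subseteq> Fset d N" using Fset_face_sub[OF j] by blast
  have z: "Qh j (V a) q * f (X q) = 0" if q: "q \<in> Fset d N - ?U" for q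
  proof -
    obtain k s b where kb: "k < d" "b \<in> PF k" "q = F k s b" using Fset_elem q by blast
    have "k \<noteq> j" using q kb by (cases s) auto
    thus ?thesis using kb by simp
  qed
  have "(\<Sum>q\<in>Fset d N. Qh j (V a) q * f (X q)) = (\<Sum>q\<in>?U. Qh j (V a) q * f (X q))"
    by (rule sum.mono_neutral_right[OF finite_Fset sub]) (use z in blast)
  also have "\<dots> = (\<Sum>q\<in>Fset_face d N j True. Qh j (V a) q * f (X q)) + (\<Sum>q\<in>Fset_face d N j False. Qh j (V a) q * f (X q))"
    by (rule sum.union_disjoint) (simp, simp, auto simp: Fset_face_def)
  also have "\<dots> = (\<Prod>k\<in>{..<d}-{j}. w (a k)) / 2 * (poly (lagr x N (a j)) 1 * f ((X (V a))(j := 1))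
          - poly (lagr x N (a j)) (-1) * f ((X (V a))(j := -1)))"
    unfolding face_term[OF a j] by (simp add: sgnb_def field_simps)
  finally show ?thesis .
qed

lemma Mset_sum_vol: "(\<Sum>q\<in>Mset d nm. Qh j (V a) q * f (X q)) = 0"
  by (rule sum.neutral) (auto dest!: Mset_elem)

end


context setting begin

lemma vol_row:
  assumes a: "a \<in> PV" and j: "j < d" and f: "f \<in> tpoly d (\<lambda>_. N)"
  shows "Srow j (V a) f = W (V a) * pderiv_at f j (X (V a))"
proof -
  define y where "y = X (V a)"
  obtain P where degP: "degree P \<le> N" and P: "\<forall>t. f (y(j:=t)) = poly P t"
    using tpoly_univ_extract[OF f j, where y=y] by auto
  define wo where "wo = (\<Prod>k\<in>{..<d}-{j}. w (a k))"
  define l where "l = lagr x N (a j)"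
  have aj: "a j \<le> N" using a j by (auto simp: PiE_iff)
  have hV: "f (X (V (a(j:=m)))) = poly P (x m)" for m
  proof -
    have "X (V (a(j:=m))) = y(j := x m)" by (rule ext) (simp add: y_def)
    thus ?thesis using P by simp
  qed
  have T1: "(\<Sum>b\<in>PV. Qvol d x w N j a b * f (X (V b))) = wo * (w (a j) * poly (pderiv P) (x (a j)))"
  proof -
    have "(\<Sum>b\<in>PV. Qvol d x w N j a b * f (X (V b)))
       = (\<Sum>b\<in>PV. (\<Prod>k<d. if k = j then Q1D x w N (a k) (b k) else (if a k = b k then w (a k) else 0)) * f (X (V b)))"
      by (simp add: Qvol_def)
    also have "\<dots> = wo * (\<Sum>m\<le>N. Q1D x w N (a j) m * f (X (V (a(j:=m)))))"
      unfolding wo_def by (rule red[OF a j])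
    also have "\<dots> = wo * (w (a j) * poly (pderiv P) (x (a j)))"
      by (simp only: hV L1[OF inj degP])
    finally show ?thesis .
  qed
  have T2: "(\<Sum>b\<in>PV. Qvol d x w N j b a * f (X (V b)))
      = wo * (poly (l * P) 1 - poly (l * P) (-1) - w (a j) * poly (pderiv P) (x (a j)))"
  proof -
    have "(\<Sum>b\<in>PV. Qvol d x w N j b a * f (X (V b)))
       = (\<Sum>b\<in>PV. (\<Prod>k<d. if k = j then (\<lambda>u v. Q1D x w N v u) (a k) (b k) else (if a k = b k then w (a k) else 0)) * f (X (V b)))"
      unfolding Qvol_def by (rule sum.cong[OF refl], rule arg_cong2[where f="(*)"], rule prod.cong) auto
    also have "\<dots> = wo * (\<Sum>m\<le>N. (\<lambda>u v. Q1D x w N v u) (a j) m * f (X (V (a(j:=m)))))"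
      unfolding wo_def by (rule red[OF a j])
    also have "\<dots> = wo * (\<Sum>m\<le>N. Q1D x w N m (a j) * poly P (x m))"
      by (simp only: hV)
    also have "\<dots> = wo * (poly (l * P) 1 - poly (l * P) (-1) - w (a j) * poly (pderiv P) (x (a j)))"
      unfolding l_def by (simp add: L2[OF inj degP aj N1 quad])
    finally show ?thesis .
  qed
  have VV: "(\<Sum>q\<in>Vset d N. Qh j (V a) q * f (X q))
     = ((\<Sum>b\<in>PV. Qvol d x w N j a b * f (X (V b))) - (\<Sum>b\<in>PV. Qvol d x w N j b a * f (X (V b)))) / 2"
  proof -
    have "(\<Sum>q\<in>Vset d N. Qh j (V a) q * f (X q)) = (\<Sum>b\<in>PV. Qh j (V a) (V b) * f (X (V b)))"
      by (rule sum_Vset)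
    also have "\<dots> = (\<Sum>b\<in>PV. Qvol d x w N j a b * f (X (V b)) / 2 - Qvol d x w N j b a * f (X (V b)) / 2)"
      by (rule sum.cong[OF refl]) (simp add: field_simps)
    also have "\<dots> = ((\<Sum>b\<in>PV. Qvol d x w N j a b * f (X (V b))) - (\<Sum>b\<in>PV. Qvol d x w N j b a * f (X (V b)))) / 2"
      by (simp add: sum_subtractf sum_divide_distrib diff_divide_distrib)
    finally show ?thesis .
  qed
  have FF: "(\<Sum>q\<in>Fset d N. Qh j (V a) q * f (X q)) = wo / 2 * (poly l 1 * poly P 1 - poly l (-1) * poly P (-1))"
    using Fset_sum_vol[OF a j, of f] P unfolding wo_def l_def y_def by simp
  have S: "Srow j (V a) f = wo * (w (a j) * poly (pderiv P) (x (a j)))"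
    unfolding Srow_def sum_allnodes VV T1 T2 FF Mset_sum_vol
    by (simp add: field_simps)
  have jin: "j \<in> {..<d}" using j by simp
  have WV: "W (V a) = w (a j) * wo"
    unfolding wo_def by (simp add: prod.remove[OF _ jin])
  have fP: "(\<lambda>t. f (y(j := t))) = poly P" using P by auto
  have D: "pderiv_at f j y = poly (pderiv P) (x (a j))"
    unfolding pderiv_at_def fP by (simp add: y_def deriv_poly)
  show ?thesis using S WV D unfolding y_def by simp
qed

end


lemma alg1: "(a * b / 2) * c = a / 2 * (b * (c::real))" by simp
lemma alg3: "- (n * W * e) / 2 * c = - (n * W / 2) * (e * (c::real))" by simp
lemma alg2: "- (n * W / 2) * SV + 0 + n / 2 * SM = n / 2 * (SM - W * (SV::real))" by (simp add: algebra_simps)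

context setting begin

lemma Vset_sum_face:
  "(\<Sum>q\<in>Vset d N. Qh j (F k s b0) q * u (X q)) = - (nhat j (F k s b0) * W (F k s b0) / 2) * (\<Sum>q\<in>Vset d N. E (F k s b0) q * u (X q))"
  unfolding sum_distrib_left
proof (rule sum.cong[OF refl])
  fix q assume "q \<in> Vset d N"
  then obtain a where q: "q = V a" using Vset_elem by blast
  show "Qh j (F k s b0) q * u (X q) = - (nhat j (F k s b0) * W (F k s b0) / 2) * (E (F k s b0) q * u (X q))"
    unfolding q by (simp only: Qhm.simps) (rule alg3)
qed

lemma Fset_sum_face: "(\<Sum>q\<in>Fset d N. Qh j (F k s b0) q * u (X q)) = 0"
proof (rule sum.neutral, rule ballI)
  fix q assume "q \<in> Fset d N"
  then obtain k' s' b' where q: "q = F k' s' b'" using Fset_elem by blast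
  show "Qh j (F k s b0) q * u (X q) = 0" unfolding q by (simp only: Qhm.simps mult_zero_left)
qed

lemma Mset_sum_face:
  assumes b0: "b0 \<in> PF k"
  shows "(\<Sum>q\<in>Mset d nm. Qh j (F k s b0) q * u (X q)) = nhat j (F k s b0) / 2 * (\<Sum>q\<in>Mset d nm. Emf q (F k s b0) * W q * u (X q))"
proof -
  have wF: "W (F k s b0) \<noteq> 0" using wtF_pos[OF b0, of s] by linarith
  show ?thesis unfolding sum_distrib_left
  proof (rule sum.cong[OF refl])
    fix q assume "q \<in> Mset d nm"
    then obtain k' s' m where q: "q = M k' s' m" using Mset_elem by blast
    have e: "W (F k s b0) * Efm d w wm Emf (F k s b0) q = Emf q (F k s b0) * W q" by (rule Efm_cancel[OF wF])
    have "Qh j (F k s b0) q = nhat j (F k s b0) * (W (F k s b0) * Efm d w wm Emf (F k s b0) q) / 2"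
      unfolding q by (simp only: Qhm.simps mult.assoc)
    also have "\<dots> = nhat j (F k s b0) * (Emf q (F k s b0) * W q) / 2" by (simp only: e)
    finally show "Qh j (F k s b0) q * u (X q) = nhat j (F k s b0) / 2 * (Emf q (F k s b0) * W q * u (X q))"
      by (simp only: alg1)
  qed
qed

lemma face_row_gen:
  assumes b0: "b0 \<in> PF k"
  shows "Srow j (F k s b0) u = nhat j (F k s b0) / 2 *
     ((\<Sum>q\<in>Mset d nm. Emf q (F k s b0) * W q * u (X q)) - W (F k s b0) * (\<Sum>q\<in>Vset d N. E (F k s b0) q * u (X q)))"
  unfolding Srow_def sum_allnodes Vset_sum_face Fset_sum_face Mset_sum_face[OF b0]
  by (rule alg2)

definition Lf where "Lf k b0 y = (\<Prod>i\<in>{..<d}-{k}. poly (lagr x N (b0 i)) (y i))"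

lemma Lf_tpoly: assumes b0: "b0 \<in> PF k" and k: "k < d" shows "Lf k b0 \<in> tpoly d ((\<lambda>_. N)(k := 0))"
proof -
  have "(\<lambda>y. \<Prod>i\<in>{..<d}-{k}. poly (lagr x N (b0 i)) (y i)) \<in> tpoly d (\<lambda>k'. \<Sum>i\<in>{..<d}-{k}. ((\<lambda>_. 0)(i := N)) k')"
    apply (rule tpoly_prod, simp)
    apply (rule tpoly_univ)
    using b0 by (auto intro: degree_lagr simp: PiE_iff)
  hence "(\<lambda>y. \<Prod>i\<in>{..<d}-{k}. poly (lagr x N (b0 i)) (y i)) \<in> tpoly d ((\<lambda>_. N)(k := 0))"
    by (rule tpoly_mono) (simp add: fun_upd_def)
  thus ?thesis unfolding Lf_def[abs_def] .
qed

lemma Lf_node: assumes b0: "b0 \<in> PF k" and b: "b \<in> PF k"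
  shows "Lf k b0 (X (F k s b)) = (if b = b0 then 1 else 0)"
proof -
  have "Lf k b0 (X (F k s b)) = (\<Prod>i\<in>{..<d}-{k}. poly (lagr x N (b0 i)) (x (b i)))"
    unfolding Lf_def by (rule prod.cong) auto
  also have "\<dots> = (if b = b0 then 1 else 0)" by (rule prod_lagr_delta[OF inj _ b0 b]) simp
  finally show ?thesis .
qed

lemma XF_k: "X (F k s b) k = sgnb s" by simp
lemma XM_k: "k < d \<Longrightarrow> m < nm k s \<Longrightarrow> X (M k s m) k = sgnb s" using hxm by simp

lemma Emf_Lf:
  assumes b0: "b0 \<in> PF k" and k: "k < d" and mq: "q \<in> Mset_face nm k s"
  shows "Emf q (F k s b0) = Lf k b0 (X q)"
proof -
  have "Lf k b0 (X q) = (\<Sum>fn\<in>Fset_face d N k s. Emf q fn * Lf k b0 (X fn))"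
    using hEmf[rule_format, OF k Lf_tpoly[OF b0 k] mq] by simp
  also have "\<dots> = (\<Sum>b\<in>PF k. Emf q (F k s b) * Lf k b0 (X (F k s b)))" by (rule sum_Fset_face)
  also have "\<dots> = (\<Sum>b\<in>PF k. if b = b0 then Emf q (F k s b) else 0)"
  proof (rule sum.cong[OF refl])
    fix b assume b: "b \<in> PF k"
    show "Emf q (F k s b) * Lf k b0 (X (F k s b)) = (if b = b0 then Emf q (F k s b) else 0)"
      by (simp only: Lf_node[OF b0 b]) simp
  qed
  also have "\<dots> = Emf q (F k s b0)" using b0 finite_PF by simp
  finally show ?thesis by simp
qed

lemma mort_face:
  assumes k: "k < d" and b0: "b0 \<in> PF k" and D: "D \<le> Nf" "D \<le> Nm"
    and u: "(\<lambda>y. u (y(k := sgnb s))) \<in> tpoly d ((\<lambda>_. D)(k := 0))"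
  shows "(\<Sum>q\<in>Mset d nm. Emf q (F k s b0) * W q * u (X q)) = W (F k s b0) * u (X (F k s b0))"
proof -
  define qf where "qf y = Lf k b0 y * u (y(k := sgnb s))" for y
  have qt: "qf \<in> tpoly d (\<lambda>i. ((\<lambda>_. N)(k := 0)) i + ((\<lambda>_. D)(k := 0)) i)"
    unfolding qf_def[abs_def] by (rule tpoly_mult[OF Lf_tpoly[OF b0 k] u])
  have qm: "qf \<in> tpoly d ((\<lambda>_. N + Nm)(k := 0))" by (rule tpoly_mono[OF qt]) (use D in auto)
  have qfc: "qf \<in> tpoly d ((\<lambda>_. N + Nf)(k := 0))" by (rule tpoly_mono[OF qt]) (use D in auto)
  have "(\<Sum>q\<in>Mset d nm. Emf q (F k s b0) * W q * u (X q)) = (\<Sum>q\<in>Mset_face nm k s. Emf q (F k s b0) * W q * u (X q))"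
  proof (rule sum.mono_neutral_right[OF finite_Mset Mset_face_sub[OF k]])
    show "\<forall>q\<in>Mset d nm - Mset_face nm k s. Emf q (F k s b0) * W q * u (X q) = 0"
    proof
      fix q assume q: "q \<in> Mset d nm - Mset_face nm k s"
      then obtain k' s' m where qq: "k' < d" "m < nm k' s'" "q = M k' s' m" using Mset_elem by blast
      have ne: "(k', s') \<noteq> (k, s)"
      proof
        assume "(k', s') = (k, s)"
        hence "q \<in> Mset_face nm k s" using qq by simp
        thus False using q by simp
      qed
      have fF: "F k s b0 \<in> Fset d N" using k b0 by simp
      have "Emf q (F k s b0) = 0" using hEmf_blk[rule_format, OF _ fF, of q] q qq ne by auto
      thus "Emf q (F k s b0) * W q * u (X q) = 0" by simp
    qed
  qed
  also have "\<dots> = (\<Sum>q\<in>Mset_face nm k s. W q * qf (X q))"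
  proof (rule sum.cong[OF refl])
    fix q assume q: "q \<in> Mset_face nm k s"
    then obtain m where m: "m < nm k s" "q = M k s m" by (auto simp: Mset_face_def)
    have "(X q)(k := sgnb s) = X q" using XM_k[OF k m(1)] m(2) by auto
    thus "Emf q (F k s b0) * W q * u (X q) = W q * qf (X q)"
      unfolding qf_def Emf_Lf[OF b0 k q] by simp
  qed
  also have "\<dots> = face_integral d k s qf"
    using hmortar_exact[rule_format, OF k, of s] unfolding face_quad_exact_def using qm by (rule bspec)
  also have "\<dots> = (\<Sum>q\<in>Fset_face d N k s. W q * qf (X q))"
    by (rule sym, rule bspec[OF hface_exact[rule_format, OF k, of s, unfolded face_quad_exact_def] qfc])
  also have "\<dots> = (\<Sum>b\<in>PF k. W (F k s b) * qf (X (F k s b)))" by (rule sum_Fset_face)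
  also have "\<dots> = (\<Sum>b\<in>PF k. if b = b0 then W (F k s b) * u (X (F k s b)) else 0)"
  proof (rule sum.cong[OF refl])
    fix b assume b: "b \<in> PF k"
    have hx: "(X (F k s b))(k := sgnb s) = X (F k s b)" by (rule ext) simp
    show "W (F k s b) * qf (X (F k s b)) = (if b = b0 then W (F k s b) * u (X (F k s b)) else 0)"
      by (simp only: qf_def Lf_node[OF b0 b] hx) (cases "b = b0", simp_all)
  qed
  also have "\<dots> = W (F k s b0) * u (X (F k s b0))" using b0 finite_PF by simp
  finally show ?thesis .
qed

end


lemma alg4: "0 + - (n * W / 2) * SF + n * W / 2 * c = n * W / 2 * (c - (SF::real))" by (simp add: algebra_simps)

context setting begin

lemma mort_row_gen:
  assumes k: "k < d" and m: "m < nm k s"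
  shows "Srow j (M k s m) u = nhat j (M k s m) * W (M k s m) / 2 * (u (X (M k s m)) - (\<Sum>q\<in>Fset d N. Emf (M k s m) q * u (X q)))"
proof -
  have SV: "(\<Sum>q\<in>Vset d N. Qh j (M k s m) q * u (X q)) = 0"
  proof (rule sum.neutral, rule ballI)
    fix q assume "q \<in> Vset d N"
    then obtain a where q: "q = V a" using Vset_elem by blast
    show "Qh j (M k s m) q * u (X q) = 0" unfolding q by (simp only: Qhm.simps mult_zero_left)
  qed
  have SF: "(\<Sum>q\<in>Fset d N. Qh j (M k s m) q * u (X q)) = - (nhat j (M k s m) * W (M k s m) / 2) * (\<Sum>q\<in>Fset d N. Emf (M k s m) q * u (X q))"
    unfolding sum_distrib_left
  proof (rule sum.cong[OF refl])
    fix q assume "q \<in> Fset d N"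
    then obtain k' s' b where q: "q = F k' s' b" using Fset_elem by blast
    show "Qh j (M k s m) q * u (X q) = - (nhat j (M k s m) * W (M k s m) / 2) * (Emf (M k s m) q * u (X q))"
      unfolding q by (simp only: Qhm.simps) (rule alg3)
  qed
  have M0: "M k s m \<in> Mset d nm" using k m by simp
  have SM: "(\<Sum>q\<in>Mset d nm. Qh j (M k s m) q * u (X q)) = nhat j (M k s m) * W (M k s m) / 2 * u (X (M k s m))"
  proof -
    have "(\<Sum>q\<in>Mset d nm. Qh j (M k s m) q * u (X q)) = (\<Sum>q\<in>Mset d nm. if q = M k s m then nhat j (M k s m) * W (M k s m) / 2 * u (X (M k s m)) else 0)"
    proof (rule sum.cong[OF refl])
      fix q assume "q \<in> Mset d nm"
      then obtain k' s' m' where q: "q = M k' s' m'" using Mset_elem by blast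
      show "Qh j (M k s m) q * u (X q) = (if q = M k s m then nhat j (M k s m) * W (M k s m) / 2 * u (X (M k s m)) else 0)"
        unfolding q by (cases "(k, s, m) = (k', s', m')") (simp_all only: Qhm.simps, auto)
    qed
    also have "\<dots> = nhat j (M k s m) * W (M k s m) / 2 * u (X (M k s m))" using M0 by simp
    finally show ?thesis .
  qed
  show ?thesis unfolding Srow_def sum_allnodes SV SF SM by (rule alg4)
qed

lemma mort_cond:
  assumes k: "k < d" and m: "m < nm k s"
    and u: "(\<lambda>y. u (y(k := sgnb s))) \<in> tpoly d ((\<lambda>_. N)(k := 0))"
  shows "(\<Sum>q\<in>Fset d N. Emf (M k s m) q * u (X q)) = u (X (M k s m))"
proof -
  have mM: "M k s m \<in> Mset d nm" using k m by simp
  have mq: "M k s m \<in> Mset_face nm k s" using m by simp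
  have "(\<Sum>q\<in>Fset d N. Emf (M k s m) q * u (X q)) = (\<Sum>q\<in>Fset_face d N k s. Emf (M k s m) q * u (X q))"
  proof (rule sum.mono_neutral_right[OF finite_Fset Fset_face_sub[OF k]])
    show "\<forall>q\<in>Fset d N - Fset_face d N k s. Emf (M k s m) q * u (X q) = 0"
    proof
      fix q assume q: "q \<in> Fset d N - Fset_face d N k s"
      then obtain k' s' b where qq: "k' < d" "b \<in> PF k'" "q = F k' s' b" using Fset_elem by blast
      have ne: "(k, s) \<noteq> (k', s')"
      proof
        assume "(k, s) = (k', s')"
        hence "q \<in> Fset_face d N k s" using qq by simp
        thus False using q by simp
      qed
      have fq: "q \<in> Fset d N" using q by simp
      have "Emf (M k s m) q = 0" using hEmf_blk[rule_format, OF mM fq] qq ne by simp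
      thus "Emf (M k s m) q * u (X q) = 0" by simp
    qed
  qed
  also have "\<dots> = (\<Sum>q\<in>Fset_face d N k s. Emf (M k s m) q * u ((X q)(k := sgnb s)))"
  proof (rule sum.cong[OF refl])
    fix q assume "q \<in> Fset_face d N k s"
    then obtain b where q: "q = F k s b" by (auto simp: Fset_face_def)
    have "(X q)(k := sgnb s) = X q" unfolding q by (rule ext) simp
    thus "Emf (M k s m) q * u (X q) = Emf (M k s m) q * u ((X q)(k := sgnb s))" by simp
  qed
  also have "\<dots> = u ((X (M k s m))(k := sgnb s))"
    using hEmf[rule_format, OF k u mq] by simp
  also have "(X (M k s m))(k := sgnb s) = X (M k s m)" using XM_k[OF k m] by auto
  finally show ?thesis .
qed

lemma g_sub:
  assumes i: "i < d" and k: "k < d"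
  shows "\<exists>D. D \<le> Nf \<and> D \<le> Nm \<and> D \<le> N \<and> (\<forall>c. (\<lambda>y. g i k (y(k := c))) \<in> tpoly d ((\<lambda>_. D)(k := 0)))"
proof -
  obtain D Dk where D: "D \<le> Nf" "D \<le> Nm" "D \<le> N" "Dk \<le> N" and gt: "g i k \<in> tpoly d ((\<lambda>_. D)(k := Dk))"
    using hg i k by blast
  have "(\<lambda>y. g i k (y(k := c))) \<in> tpoly d ((\<lambda>_. D)(k := 0))" for c
    using tpoly_subst[OF gt k, of c] by simp
  thus ?thesis using D by blast
qed

lemma g_tpoly:
  assumes i: "i < d" and j: "j < d"
  shows "g i j \<in> tpoly d (\<lambda>_. N)"
proof -
  obtain D Dk where D: "D \<le> Nf" "D \<le> Nm" "D \<le> N" "Dk \<le> N" and gt: "g i j \<in> tpoly d ((\<lambda>_. D)(j := Dk))"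
    using hg i j by blast
  show ?thesis by (rule tpoly_mono[OF gt]) (use D in auto)
qed

lemma face_S_zero:
  assumes k: "k < d" and b: "b \<in> PF k" and ut: "u \<in> tpoly d (\<lambda>_. N)"
    and D: "D \<le> Nf" "D \<le> Nm" and us: "(\<lambda>y. u (y(k := sgnb s))) \<in> tpoly d ((\<lambda>_. D)(k := 0))"
  shows "Srow j (F k s b) u = 0"
proof -
  have fF: "F k s b \<in> Fset d N" using k b by simp
  have i: "(\<Sum>q\<in>Vset d N. E (F k s b) q * u (X q)) = u (X (F k s b))"
    using hE[rule_format, OF ut fF] .
  show ?thesis unfolding face_row_gen[OF b] i mort_face[OF k b D us] by simp
qed

lemma mort_S_zero:
  assumes k: "k < d" and m: "m < nm k s"
    and us: "(\<lambda>y. u (y(k := sgnb s))) \<in> tpoly d ((\<lambda>_. N)(k := 0))"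
  shows "Srow j (M k s m) u = 0"
  unfolding mort_row_gen[OF k m] mort_cond[OF k m us] by simp

lemma row_zero:
  assumes i: "i < d" and p: "p \<in> allnodes d N nm"
  shows "(\<Sum>q\<in>allnodes d N nm. Qphys d N x w xm wm E Emf g i p q) = 0"
proof (cases p)
  case (V a)
  have a: "a \<in> PV" using p V by simp
  have one: "Srow j (V a) (\<lambda>_. 1) = 0" if j: "j < d" for j
  proof -
    have "Srow j (V a) (\<lambda>_. 1) = W (V a) * pderiv_at (\<lambda>_. 1) j (X (V a))"
      by (rule vol_row[OF a j tpoly_const])
    also have "pderiv_at (\<lambda>_. 1) j (X (V a)) = 0" by (simp add: pderiv_at_def)
    finally show ?thesis by simp
  qed
  have rng: "\<forall>k<d. -1 \<le> X (V a) k \<and> X (V a) k \<le> 1" using a xr by (auto simp: PiE_iff)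
  have "(\<Sum>j<d. g i j (X p) * Srow j p (\<lambda>_. 1) + Srow j p (g i j)) = (\<Sum>j<d. W (V a) * pderiv_at (g i j) j (X (V a)))"
    unfolding V by (rule sum.cong[OF refl]) (simp add: one vol_row[OF a _ g_tpoly[OF i]])
  also have "\<dots> = W (V a) * (\<Sum>j<d. pderiv_at (g i j) j (X (V a)))" by (simp add: sum_distrib_left)
  also have "\<dots> = 0" using hGCL i rng by simp
  finally show ?thesis unfolding row_decomp by simp
next
  case (F k s b)
  have k: "k < d" and b: "b \<in> PF k" using p F by auto
  have "(\<Sum>j<d. g i j (X p) * Srow j p (\<lambda>_. 1) + Srow j p (g i j)) = 0"
  proof (rule sum.neutral, rule ballI)
    fix j assume j: "j \<in> {..<d}"
    show "g i j (X p) * Srow j p (\<lambda>_. 1) + Srow j p (g i j) = 0"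
    proof (cases "j = k")
      case True
      obtain D where D: "D \<le> Nf" "D \<le> Nm" "D \<le> N" and gs: "\<forall>c. (\<lambda>y. g i k (y(k := c))) \<in> tpoly d ((\<lambda>_. D)(k := 0))"
        using g_sub[OF i k] by blast
      have z1: "Srow j p (\<lambda>_. 1) = 0" unfolding F
        by (rule face_S_zero[OF k b tpoly_const, of 0]) (simp_all add: tpoly_const)
      have z2: "Srow j p (g i j) = 0" unfolding F True
        by (rule face_S_zero[OF k b g_tpoly[OF i k] D(1,2)]) (use gs in simp)
      show ?thesis using z1 z2 by simp
    next
      case False
      show ?thesis unfolding F face_row_gen[OF b] using False by simp
    qed
  qed
  thus ?thesis unfolding row_decomp by simp
next
  case (M k s m)
  have k: "k < d" and m: "m < nm k s" using p M by auto
  have "(\<Sum>j<d. g i j (X p) * Srow j p (\<lambda>_. 1) + Srow j p (g i j)) = 0"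
  proof (rule sum.neutral, rule ballI)
    fix j assume j: "j \<in> {..<d}"
    show "g i j (X p) * Srow j p (\<lambda>_. 1) + Srow j p (g i j) = 0"
    proof (cases "j = k")
      case True
      obtain D where D: "D \<le> Nf" "D \<le> Nm" "D \<le> N" and gs: "\<forall>c. (\<lambda>y. g i k (y(k := c))) \<in> tpoly d ((\<lambda>_. D)(k := 0))"
        using g_sub[OF i k] by blast
      have z1: "Srow j p (\<lambda>_. 1) = 0" unfolding M
        by (rule mort_S_zero[OF k m]) (simp add: tpoly_const)
      have z2: "Srow j p (g i j) = 0" unfolding M True
        by (rule mort_S_zero[OF k m], rule tpoly_mono[OF gs[rule_format]]) (use D in auto)
      show ?thesis using z1 z2 by simp
    next
      case False
      show ?thesis unfolding M mort_row_gen[OF k m] using False by simp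
    qed
  qed
  thus ?thesis unfolding row_decomp by simp
qed

end

theorem mainTheorem4:
  fixes d N Nf Nm Ngeo :: nat
    and x w :: "nat \<Rightarrow> real"
    and nm :: "nat \<Rightarrow> bool \<Rightarrow> nat"
    and xm :: "nat \<Rightarrow> bool \<Rightarrow> nat \<Rightarrow> nat \<Rightarrow> real"
    and wm :: "nat \<Rightarrow> bool \<Rightarrow> nat \<Rightarrow> real"
    and E Emf :: "hnode \<Rightarrow> hnode \<Rightarrow> real"
    and g :: "nat \<Rightarrow> nat \<Rightarrow> (nat \<Rightarrow> real) \<Rightarrow> real"
  assumes hd: "d = 2 \<or> d = 3"
    and hN: "N \<ge> 1"
    and hquad: "gauss_legendre N x w \<or> gauss_lobatto N x w"
    \<comment> \<open>E maps volume values of a Q^N polynomial to its face values\<close>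
    and hE: "\<forall>f \<in> tpoly d (\<lambda>_. N). \<forall>fn \<in> Fset d N.
               (\<Sum>a\<in>Vset d N. E fn a * f (pt x xm a)) = f (pt x xm fn)"
    \<comment> \<open>mortar nodes lie on their face\<close>
    and hxm: "\<forall>k<d. \<forall>s. \<forall>j<nm k s. xm k s j k = sgnb s \<and>
               (\<forall>i<d. -1 \<le> xm k s j i \<and> xm k s j i \<le> 1)"
    \<comment> \<open>E_mf is block diagonal over faces\<close>
    and hEmf_blk: "\<forall>mn \<in> Mset d nm. \<forall>fn \<in> Fset d N.
               (case (mn, fn) of (M k s _, F k' s' _) \<Rightarrow> (k, s) \<noteq> (k', s') \<longrightarrow> Emf mn fn = 0
                                | _ \<Rightarrow> True)"
    \<comment> \<open>each block interpolates face Q^N polynomials to the mortar nodes\<close>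
    and hEmf: "\<forall>k<d. \<forall>s. \<forall>q \<in> tpoly d ((\<lambda>_. N)(k := 0)). \<forall>mn \<in> Mset_face nm k s.
               (\<Sum>fn\<in>Fset_face d N k s. Emf mn fn * q (pt x xm fn)) = q (pt x xm mn)"
    and hface_exact: "\<forall>k<d. \<forall>s. face_quad_exact d k s (N + Nf) (Fset_face d N k s) (pt x xm) (wt d w wm)"
    and hmortar_exact: "\<forall>k<d. \<forall>s. face_quad_exact d k s (N + Nm) (Mset_face nm k s) (pt x xm) (wt d w wm)"
    \<comment> \<open>discrete geometric conservation law on the reference element\<close>
    and hGCL: "\<forall>i<d. \<forall>y. (\<forall>k<d. -1 \<le> y k \<and> y k \<le> 1) \<longrightarrow> (\<Sum>j<d. pderiv_at (g i j) j y) = 0"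
    and hNgeo: "Ngeo \<ge> 1"
    and hcases:
      "((\<forall>i<d. \<forall>j<d. g i j \<in> tpoly d (\<lambda>_. Ngeo)) \<and> Ngeo \<le> min N (min Nf Nm))
       \<or> ((\<forall>i<d. \<forall>j<d. g i j \<in> tpoly d (\<lambda>k. if k = j then Ngeo else Ngeo - 1))
          \<and> Ngeo \<le> min N (min (Nf + 1) (Nm + 1)))"
  shows "\<forall>i<d.
           (\<forall>p \<in> allnodes d N nm. \<forall>q \<in> allnodes d N nm.
              Qphys d N x w xm wm E Emf g i p q + Qphys d N x w xm wm E Emf g i q p
                = (if p = q \<and> is_mortar p then nphys d x xm g i p * wt d w wm p else 0))
         \<and> (\<forall>p \<in> allnodes d N nm. (\<Sum>q \<in> allnodes d N nm. Qphys d N x w xm wm E Emf g i p q) = 0)"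
proof -
  have sm: "strict_mono_on {..N} x" and xr: "\<forall>j\<le>N. -1 \<le> x j \<and> x j \<le> 1 \<and> 0 < w j"
    using hquad by (auto simp: gauss_legendre_def gauss_lobatto_def)
  have inj: "inj_on x {..N}" by (rule strict_mono_on_imp_inj_on[OF sm])
  have quad: "quad_exact_1d N x w (2*N-1)"
    using hquad by (auto simp: gauss_legendre_def gauss_lobatto_def quad_exact_1d_def)
  have hg: "\<forall>i<d. \<forall>k<d. \<exists>D Dk. D \<le> Nf \<and> D \<le> Nm \<and> D \<le> N \<and> Dk \<le> N \<and> g i k \<in> tpoly d ((\<lambda>_. D)(k := Dk))"
  proof (intro allI impI)
    fix i k assume i: "i < d" and k: "k < d"
    show "\<exists>D Dk. D \<le> Nf \<and> D \<le> Nm \<and> D \<le> N \<and> Dk \<le> N \<and> g i k \<in> tpoly d ((\<lambda>_. D)(k := Dk))"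
      using hcases
    proof
      assume a: "(\<forall>i<d. \<forall>j<d. g i j \<in> tpoly d (\<lambda>_. Ngeo)) \<and> Ngeo \<le> min N (min Nf Nm)"
      have e: "(\<lambda>_::nat. Ngeo)(k := Ngeo) = (\<lambda>_. Ngeo)" by auto
      show ?thesis using a i k by (intro exI[of _ Ngeo]) (auto simp: e)
    next
      assume b: "(\<forall>i<d. \<forall>j<d. g i j \<in> tpoly d (\<lambda>k. if k = j then Ngeo else Ngeo - 1))
          \<and> Ngeo \<le> min N (min (Nf + 1) (Nm + 1))"
      have e: "(\<lambda>k'. if k' = k then Ngeo else Ngeo - 1) = (\<lambda>_::nat. Ngeo - 1)(k := Ngeo)" by auto
      have "g i k \<in> tpoly d ((\<lambda>_::nat. Ngeo - 1)(k := Ngeo))" using b i k unfolding e[symmetric] by blast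
      thus ?thesis using b by - (rule exI[of _ "Ngeo - 1"], rule exI[of _ Ngeo], auto)
    qed
  qed
  interpret S: setting d N Nf Nm x w nm xm wm E Emf g
    apply unfold_locales
                apply (fact inj)
               apply (use xr in blast)
              apply (use xr in blast)
             apply (fact hN)
            apply (fact quad)
           apply (fact hE)
          apply (fact hxm)
         apply (fact hEmf_blk)
        apply (fact hEmf)
       apply (fact hface_exact)
      apply (fact hmortar_exact)
     apply (fact hGCL)
    apply (fact hg)
    done
  show ?thesis
  proof (intro allI impI conjI ballI)
    fix i p q assume i: "i < d" and p: "p \<in> allnodes d N nm" and q: "q \<in> allnodes d N nm"
    show "Qphys d N x w xm wm E Emf g i p q + Qphys d N x w xm wm E Emf g i q p
          = (if p = q \<and> is_mortar p then nphys d x xm g i p * wt d w wm p else 0)"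
      by (rule S.Qphys_sym[OF p q])
  next
    fix i p assume i: "i < d" and p: "p \<in> allnodes d N nm"
    show "(\<Sum>q \<in> allnodes d N nm. Qphys d N x w xm wm E Emf g i p q) = 0"
      by (rule S.row_zero[OF i p])
  qed
qed

end
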